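(* Consider the portfolio loss $f(x,y)=-x^Ty$ on $\mathcal{X}\times\mathbb{R}^d$ with $\mathcal{X}\subseteq\mathbb{R}^d$, and let $0<\beta<1$. Suppose the support of $Y$ is $\mathcal{Y}=\mathbb{R}^d$ and there exist linearly independent $x_1,x_2\in\mathcal{X}$. Then every $\mathcal{R}\supseteq\mathcal{R}_{\mathcal{X}}$ satisfies the $\beta$-aggregation condition. Moreover, if $Y$ has a continuous distribution and $\mathcal{X}$ is compact, then aggregation sampling with respect to $\mathcal{R}$ is consistent in the following sense: for every $\beta$-tail risk measure $\rho_\beta$, with probability 1, for all $n$ large enough, $\hat{\rho}_{n,\beta}(x)=\tilde{\rho}_{N(n),\beta}(x)$ for all $x\in\mathcal{X}$.
   Context: $F_x(z)=\mathbb{P}(f(x,Y)\le z)$, $F_x^{-1}(\beta)=\inf\{z:F_x(z)\ge\beta\}$, $\mathcal{R}_x=\{y: f(x,y)\ge F_x^{-1}(\beta)\}$, $\mathcal{R}_{\mathcal{X}}=\bigcup_{x\in\mathcal{X}}\mathcal{R}_x$. A set $\mathcal{R}$ with $\mathcal{R}_{\mathcal{X}}\subseteq\mathcal{R}\subset\mathbb{R}^d$ satisfies the $\beta$-aggregation condition if for all $x\in\mathcal{X}$ and $z'<F_x^{-1}(\beta)$, $\mathbb{P}(Y\in\{y:z'<f(x,y)\le F_x^{-1}(\beta)\}\cap\mathcal{R})>0$. For a real random variable $Z$, $F_Z^{-1}(u)=\inf\{z:\mathbb{P}(Z\le z)\ge u\}$; a $\beta$-tail risk measure is a map $\rho_\beta$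 from real random variables to $\mathbb{R}\cup\{\infty\}$ with $\rho_\beta(Z)=\rho_\beta(W)$ whenever $F_Z^{-1}=F_W^{-1}$ on $[\beta,1]$. For the consistency statement (where $\mathbb{E}|Y|<\infty$ and $0<\mathbb{P}(Y\in\mathcal{R}^c)<1$ are implicitly assumed): $Y_1,Y_2,\dots$ are i.i.d. copies of $Y$; $\psi_{\mathcal{R}}(y)=y$ for $y\in\mathcal{R}$ and $\psi_{\mathcal{R}}(y)=\mathbb{E}[Y\mid Y\in\mathcal{R}^c]$ otherwise; $\tilde{\rho}_{m,\beta}(x)$ is $\rho_\beta$ of a random variable uniform on $\{f(x,\psi_{\mathcal{R}}(Y_i))\}_{i=1}^m$; $N(n)$ is the smallest $m$ with $|\{i\le m:Y_i\in\mathcal{R}\}|=n$; for $N(n)>n$, $\bar{y}_n=\frac{1}{N(n)-n}\sum_{i\le N(n):Y_i\in\mathcal{R}^c}Y_i$ and $\hat{\rho}_{n,\beta}(x)$ is $\rho_\beta$ of the discrete random variable taking value $f(x,Y_i)$ with probability $1/N(n)$ for each $i\le N(n)$ with $Y_i\in\mathcal{R}$ and value $f(x,\bar{y}_n)$ with probability $(N(n)-n)/N(n)$. *)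

theory Defs
  imports "HOL-Probability.Probability"
begin

definition loss :: "'a::euclidean_space \<Rightarrow> 'a \<Rightarrow> real" where
  "loss x y = - (x \<bullet> y)"

text \<open>Generalised inverse of the cdf of a law mu on the reals:
  inf {z. mu(-inf,z] >= u}, valued in the extended reals (inf of empty set = +infinity).\<close>
definition quantile :: "real measure \<Rightarrow> real \<Rightarrow> ereal" where
  "quantile \<mu> u = Inf (ereal ` {z. measure \<mu> {..z} \<ge> u})"

definition VaR :: "'w measure \<Rightarrow> ('w \<Rightarrow> 'a::euclidean_space) \<Rightarrow> real \<Rightarrow> 'a \<Rightarrow> ereal" where
  "VaR M Y \<beta> x = quantile (distr M borel (\<lambda>w. loss x (Y w))) \<beta>"

definition riskregion_x :: "'w measure \<Rightarrow> ('w \<Rightarrow> 'a::euclidean_space) \<Rightarrow> real \<Rightarrow> 'a \<Rightarrow> 'a set" where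
  "riskregion_x M Y \<beta> x = {y. ereal (loss x y) \<ge> VaR M Y \<beta> x}"

definition riskregion :: "'w measure \<Rightarrow> ('w \<Rightarrow> 'a::euclidean_space) \<Rightarrow> real \<Rightarrow> 'a set \<Rightarrow> 'a set" where
  "riskregion M Y \<beta> X = (\<Union>x\<in>X. riskregion_x M Y \<beta> x)"

definition aggregation_condition ::
  "'w measure \<Rightarrow> ('w \<Rightarrow> 'a::euclidean_space) \<Rightarrow> real \<Rightarrow> 'a set \<Rightarrow> 'a set \<Rightarrow> bool" where
  "aggregation_condition M Y \<beta> X R \<longleftrightarrow>
     riskregion M Y \<beta> X \<subseteq> R \<and>
     (\<forall>x\<in>X. \<forall>z'::real. ereal z' < VaR M Y \<beta> x \<longrightarrow>
        measure M {w\<in>space M. Y w \<in> {y. ereal z' < ereal (loss x y) \<and> ereal (loss x y) \<le> VaR M Y \<beta> x} \<inter> R} > 0)"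

definition support_of :: "'a::topological_space measure \<Rightarrow> 'a set" where
  "support_of \<mu> = {y. \<forall>U. open U \<and> y \<in> U \<longrightarrow> emeasure \<mu> U > 0}"

text \<open>A beta-tail risk measure, viewed as a functional of the law (a Borel probability
  measure on the reals) of the random variable: it only depends on the quantile function on [beta,1].\<close>
definition tail_risk_measure :: "real \<Rightarrow> (real measure \<Rightarrow> ereal) \<Rightarrow> bool" where
  "tail_risk_measure \<beta> \<rho> \<longleftrightarrow>
     (\<forall>\<mu> \<nu>. prob_space \<mu> \<and> sets \<mu> = sets borel \<and> prob_space \<nu> \<and> sets \<nu> = sets borel \<and>
        (\<forall>u\<in>{\<beta>..1}. quantile \<mu> u = quantile \<nu> u) \<longrightarrow> \<rho> \<mu> = \<rho> \<nu>)"

definition emp_law :: "(nat \<Rightarrow> real) \<Rightarrow> nat \<Rightarrow> real measure" where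
  "emp_law g m = distr (measure_pmf (pmf_of_set {..<m})) borel g"

definition psi :: "'w measure \<Rightarrow> ('w \<Rightarrow> 'a::euclidean_space) \<Rightarrow> 'a set \<Rightarrow> 'a \<Rightarrow> 'a" where
  "psi M Y R y = (if y \<in> R then y else
     (1 / measure M {w\<in>space M. Y w \<notin> R}) *\<^sub>R set_lebesgue_integral M {w\<in>space M. Y w \<notin> R} Y)"

definition rho_tilde ::
  "(real measure \<Rightarrow> ereal) \<Rightarrow> 'w measure \<Rightarrow> ('w \<Rightarrow> 'a::euclidean_space) \<Rightarrow> 'a set
    \<Rightarrow> (nat \<Rightarrow> 'w \<Rightarrow> 'a) \<Rightarrow> 'w \<Rightarrow> nat \<Rightarrow> 'a \<Rightarrow> ereal" where
  "rho_tilde \<rho> M Y R Ys w m x = \<rho> (emp_law (\<lambda>i. loss x (psi M Y R (Ys i w))) m)"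

definition Nsamp :: "'a set \<Rightarrow> (nat \<Rightarrow> 'w \<Rightarrow> 'a) \<Rightarrow> 'w \<Rightarrow> nat \<Rightarrow> nat" where
  "Nsamp R Ys w n = (LEAST m. card {i\<in>{..<m}. Ys i w \<in> R} = n)"

definition ybar :: "'a set \<Rightarrow> (nat \<Rightarrow> 'w \<Rightarrow> 'a::euclidean_space) \<Rightarrow> 'w \<Rightarrow> nat \<Rightarrow> 'a" where
  "ybar R Ys w n = (1 / real (Nsamp R Ys w n - n)) *\<^sub>R
      (\<Sum>i\<in>{i\<in>{..<Nsamp R Ys w n}. Ys i w \<notin> R}. Ys i w)"

text \<open>hat rho_{n,beta}(x): rho of the discrete law putting mass 1/N(n) on f(x,Y_i) for each
  i < N(n) with Y_i in R and mass (N(n)-n)/N(n) on f(x, ybar_n).\<close>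
definition rho_hat ::
  "(real measure \<Rightarrow> ereal) \<Rightarrow> 'a set \<Rightarrow> (nat \<Rightarrow> 'w \<Rightarrow> 'a::euclidean_space) \<Rightarrow> 'w \<Rightarrow> nat \<Rightarrow> 'a \<Rightarrow> ereal" where
  "rho_hat \<rho> R Ys w n x = \<rho> (emp_law
     (\<lambda>i. if Ys i w \<in> R then loss x (Ys i w) else loss x (ybar R Ys w n)) (Nsamp R Ys w n))"

end

theory Submission
  imports Defs
begin

lemma exists_dyadic_block:
  fixes L N0 m :: nat
  assumes "L \<ge> 1" "m \<ge> L * 2^N0"
  shows "\<exists>n\<ge>N0. L * 2^n \<le> m \<and> m < 2 * L * 2^n"
  using assms(2)
proof (induction m rule: less_induct)
  case (less m)
  show ?case
  proof (cases "m < 2 * L * 2^N0")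
    case True then show ?thesis using less.prems by auto
  next
    case False
    then have "m div 2 \<ge> L * 2^N0" by auto
    moreover have "m div 2 < m"
    proof -
      have "0 < 2*L*2^N0" using assms(1) by simp
      then have "0 < m" using False by linarith
      then show ?thesis by simp
    qed
    ultimately obtain n where n: "n \<ge> N0" "L * 2^n \<le> m div 2" "m div 2 < 2 * L * 2^n"
      using less.IH by blast
    have "L * 2^(Suc n) \<le> m" using n(2) by auto
    moreover have "m < 2 * L * 2^(Suc n)" using n(3) by auto
    ultimately show ?thesis using n(1) by (intro exI[of _ "Suc n"]) auto
  qed
qed

lemma alg_id1: "d > 0 \<Longrightarrow> t > 0 \<Longrightarrow> (a::real) / (d * t) = (a / ((d+1) * t)) * ((d + 1) / d)"
proof -
  assume "d > 0" "t > 0"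
  then have "d + 1 \<noteq> 0" "d \<noteq> 0" "t \<noteq> 0" by auto
  then show ?thesis by (simp add: divide_simps)
qed
lemma alg_id2: "d > 0 \<Longrightarrow> t > 0 \<Longrightarrow> (a::real) / ((d+1) * t) = (a / (d * t)) * (d / (d + 1))"
proof -
  assume "d > 0" "t > 0"
  then have "d + 1 \<noteq> 0" "d \<noteq> 0" "t \<noteq> 0" by auto
  then show ?thesis by (simp add: divide_simps)
qed

lemma alg_id3: "(d::real) > 0 \<Longrightarrow> (a - e) * (d / (d + 1)) = a - e * (d / (d + 1)) - a / (d + 1)"
proof -
  assume "d > 0"
  then have "d + 1 \<noteq> 0" by auto
  then show ?thesis by (simp add: divide_simps) (simp add: algebra_simps)
qed

lemma interp_limit:
  fixes S :: "nat \<Rightarrow> real"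
  assumes inc: "\<And>m. S m \<le> S (Suc m)" and nn: "\<And>m. 0 \<le> S m"
    and lim: "\<And>j. j \<ge> 1 \<Longrightarrow> (\<lambda>n. S (j * 2^n) / real (j * 2^n)) \<longlonglongrightarrow> \<mu>"
  shows "(\<lambda>m. S m / real m) \<longlonglongrightarrow> \<mu>"
proof -
  have mono: "S a \<le> S b" if "a \<le> b" for a b
    using inc that by (simp add: incseq_SucI incseqD)
  have "\<mu> \<ge> 0"
    using lim[of 1] by (rule LIMSEQ_le_const) (auto intro!: divide_nonneg_nonneg nn)
  show ?thesis
  proof (rule LIMSEQ_I)
    fix r :: real assume "r > 0"
    define \<epsilon> where "\<epsilon> = r / 3"
    have "\<epsilon> > 0" using \<open>r>0\<close> by (simp add: \<epsilon>_def)
    obtain L0 :: nat where L0: "real L0 > (\<mu> + \<epsilon>) / \<epsilon>" using reals_Archimedean2 by blast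
    define L where "L = max L0 1"
    have L: "real L > (\<mu> + \<epsilon>) / \<epsilon>" "L \<ge> 1" using L0 unfolding L_def by auto
    have Lpos: "real L > 0" using L(2) by simp
    have bnd: "(\<mu> + \<epsilon>) / real L < \<epsilon>"
      using L(1) Lpos \<open>\<epsilon>>0\<close> by (simp add: field_simps)
    have ev: "\<forall>\<^sub>F n in sequentially. dist (S (j * 2^n) / real (j * 2^n)) \<mu> < \<epsilon>" if "j \<in> {L..2*L}" for j
      using that L(2) \<open>\<epsilon>>0\<close> by (intro tendstoD[OF lim]) auto
    have "\<forall>\<^sub>F n in sequentially. \<forall>j\<in>{L..2*L}. norm (S (j * 2^n) / real (j * 2^n) - \<mu>) < \<epsilon>"
    proof -
      have "\<forall>\<^sub>F n in sequentially. \<forall>j\<in>{L..2*L}. dist (S (j * 2^n) / real (j * 2^n)) \<mu> < \<epsilon>"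
        by (rule eventually_ball_finite) (use ev in auto)
      then show ?thesis by (simp add: dist_norm)
    qed
    then obtain N0 where N0: "\<And>n j. n \<ge> N0 \<Longrightarrow> j \<in> {L..2*L} \<Longrightarrow> \<bar>S (j * 2^n) / real (j * 2^n) - \<mu>\<bar> < \<epsilon>"
      unfolding eventually_sequentially real_norm_def by blast
    show "\<exists>no. \<forall>m\<ge>no. norm (S m / real m - \<mu>) < r"
    proof (intro exI allI impI)
      fix m assume m: "m \<ge> L * 2^N0"
      obtain n where n: "n \<ge> N0" "L * 2^n \<le> m" "m < 2 * L * 2^n"
        using exists_dyadic_block[OF L(2) m] by blast
      define j where "j = m div 2^n"
      have jL: "L \<le> j" using n(2) unfolding j_def
        by (simp add: less_eq_div_iff_mult_less_eq)
      have jU: "j < 2 * L" using n(3) unfolding j_def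
        by (simp add: div_less_iff_less_mult mult.assoc)
      have jm: "j * 2^n \<le> m" unfolding j_def by (metis div_mult_mod_eq le_add1)
      have mj: "m < (j+1) * 2^n"
      proof -
        have "m mod 2^n < 2^n" by simp
        moreover have "m = j * 2^n + m mod 2^n" unfolding j_def by (rule div_mult_mod_eq[symmetric])
        moreover have "(j+1) * 2^n = j * 2^n + (2::nat)^n" by simp
        ultimately show ?thesis by linarith
      qed
      have jpos: "real j > 0" using jL L(2) by simp
      have p2: "(2::real)^n > 0" by simp
      have "0 < L * 2^n" using L(2) by simp
      then have "0 < m" using n(2) by linarith
      then have mpos: "real m > 0" by simp
      have j1: "real j + 1 \<noteq> 0" "real j \<noteq> 0" using jpos by auto
      have rj1: "real ((j+1)*2^n) = (real j + 1) * 2^n" by (simp add: algebra_simps)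
      have rj: "real (j*2^n) = real j * 2^n" by simp
      have e1: "\<bar>S (j * 2^n) / real (j * 2^n) - \<mu>\<bar> < \<epsilon>" using N0[OF n(1)] jL jU by auto
      have e2: "\<bar>S ((j+1) * 2^n) / real ((j+1) * 2^n) - \<mu>\<bar> < \<epsilon>" using N0[OF n(1), of "j+1"] jL jU by simp
      have up: "S m / real m \<le> S ((j+1) * 2^n) / real (j * 2^n)"
      proof -
        have "S m / real m \<le> S ((j+1) * 2^n) / real m"
          using mono[of m "(j+1)*2^n"] mj mpos by (intro divide_right_mono) auto
        also have "\<dots> \<le> S ((j+1) * 2^n) / real (j * 2^n)"
        proof (rule divide_left_mono)
          show "real (j * 2^n) \<le> real m" using jm by (simp only: of_nat_le_iff)
          show "0 \<le> S ((j+1) * 2^n)" by (rule nn)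
          show "0 < real m * real (j * 2 ^ n)" using mpos jpos by simp
        qed
        finally show ?thesis .
      qed
      have lo: "S (j * 2^n) / real ((j+1) * 2^n) \<le> S m / real m"
      proof -
        have "S (j * 2^n) / real ((j+1) * 2^n) \<le> S (j * 2^n) / real m"
        proof (rule divide_left_mono)
          show "real m \<le> real ((j+1) * 2^n)" using mj by (simp only: of_nat_le_iff less_imp_le)
          show "0 \<le> S (j * 2^n)" by (rule nn)
          have "0 < (j+1) * (2::nat) ^ n" by simp
          then show "0 < real ((j+1) * 2 ^ n) * real m" using mpos by (metis mult_pos_pos of_nat_0_less_iff)
        qed
        also have "\<dots> \<le> S m / real m"
          using mono[OF jm] mpos by (intro divide_right_mono) auto
        finally show ?thesis .
      qed
      have "S ((j+1) * 2^n) / real (j * 2^n) = (S ((j+1) * 2^n) / real ((j+1) * 2^n)) * ((real j + 1) / real j)"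
        unfolding rj1 rj by (rule alg_id1[OF jpos p2])
      also have "\<dots> \<le> (\<mu> + \<epsilon>) * ((real j + 1) / real j)"
        using e2 jpos by (intro mult_right_mono) (auto simp: abs_less_iff)
      also have "\<dots> = (\<mu> + \<epsilon>) + (\<mu> + \<epsilon>) / real j"
        using j1 by (simp add: field_simps)
      also have "\<dots> \<le> (\<mu> + \<epsilon>) + (\<mu> + \<epsilon>) / real L"
        using jL Lpos \<open>\<mu>\<ge>0\<close> \<open>\<epsilon>>0\<close> by (intro add_left_mono divide_left_mono) auto
      finally have U: "S m / real m < \<mu> + 2 * \<epsilon>" using up bnd by linarith
      have "S (j * 2^n) / real ((j+1) * 2^n) = (S (j * 2^n) / real (j * 2^n)) * (real j / (real j + 1))"
        unfolding rj1 rj by (rule alg_id2[OF jpos p2])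
      also have "\<dots> \<ge> (\<mu> - \<epsilon>) * (real j / (real j + 1))"
        using e1 jpos by (intro mult_right_mono) (auto simp: abs_less_iff)
      finally have "S m / real m \<ge> (\<mu> - \<epsilon>) * (real j / (real j + 1))" using lo by linarith
      moreover have "(\<mu> - \<epsilon>) * (real j / (real j + 1)) = \<mu> - \<epsilon> * (real j / (real j + 1)) - \<mu> / (real j + 1)"
        by (rule alg_id3[OF jpos])
      moreover have "\<epsilon> * (real j / (real j + 1)) \<le> \<epsilon>"
        using jpos j1 \<open>\<epsilon>>0\<close> by (simp add: field_simps)
      moreover have "\<mu> / (real j + 1) \<le> \<mu> / real L"
        using jL Lpos \<open>\<mu>\<ge>0\<close> by (intro divide_left_mono) auto
      moreover have "\<mu> / real L \<le> (\<mu> + \<epsilon>) / real L"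
        using Lpos \<open>\<epsilon>>0\<close> by (intro divide_right_mono) auto
      ultimately have D: "S m / real m > \<mu> - 2 * \<epsilon>" using bnd by linarith
      show "norm (S m / real m - \<mu>) < r" using U D \<open>\<epsilon>>0\<close> unfolding \<epsilon>_def by auto
    qed
  qed
qed


lemma cesaro_limit:
  fixes a :: "nat \<Rightarrow> real"
  assumes "a \<longlonglongrightarrow> \<mu>"
  shows "(\<lambda>m. (\<Sum>i<m. a i) / real m) \<longlonglongrightarrow> \<mu>"
proof (rule LIMSEQ_I)
  fix r :: real assume "r > 0"
  then have "r/2 > 0" by simp
  from LIMSEQ_D[OF assms this] obtain N where N: "\<And>i. i \<ge> N \<Longrightarrow> norm (a i - \<mu>) < r/2" by blast
  define C where "C = (\<Sum>i<N. \<bar>a i - \<mu>\<bar>)"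
  have C0: "C \<ge> 0" unfolding C_def by (intro sum_nonneg) auto
  obtain K :: nat where K: "real K > 2 * C / r" using reals_Archimedean2 by blast
  show "\<exists>no. \<forall>m\<ge>no. norm ((\<Sum>i<m. a i) / real m - \<mu>) < r"
  proof (intro exI allI impI)
    fix m assume m: "m \<ge> N + K + 1"
    have mpos: "real m > 0" using m by simp
    have split: "{..<m} = {..<N} \<union> {N..<m}" using m by auto
    have "(\<Sum>i<m. a i) / real m - \<mu> = (\<Sum>i<m. a i - \<mu>) / real m"
      using mpos by (simp add: sum_subtractf diff_divide_distrib)
    moreover have "\<bar>\<Sum>i<m. a i - \<mu>\<bar> \<le> C + real (m - N) * (r/2)"
    proof -
      have "\<bar>\<Sum>i<m. a i - \<mu>\<bar> \<le> (\<Sum>i<m. \<bar>a i - \<mu>\<bar>)" by (rule sum_abs)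
      also have "\<dots> = C + (\<Sum>i\<in>{N..<m}. \<bar>a i - \<mu>\<bar>)"
        unfolding C_def split by (subst sum.union_disjoint) auto
      also have "(\<Sum>i\<in>{N..<m}. \<bar>a i - \<mu>\<bar>) \<le> (\<Sum>i\<in>{N..<m}. r/2)"
        using N by (intro sum_mono) (auto intro: less_imp_le)
      finally show ?thesis by simp
    qed
    moreover have "C + real (m - N) * (r/2) < real m * r"
    proof -
      have "real (m - N) \<le> real m" by simp
      then have "real (m - N) * (r/2) \<le> real m * (r/2)" using \<open>r>0\<close> by (intro mult_right_mono) auto
      moreover have "C < real m * (r/2)"
      proof -
        have "2 * C / r < real m" using K m by linarith
        then show ?thesis using \<open>r>0\<close> by (simp add: field_simps)
      qed
      ultimately show ?thesis by linarith
    qed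
    ultimately have "\<bar>(\<Sum>i<m. a i - \<mu>)\<bar> < r * real m" and eq: "(\<Sum>i<m. a i) / real m - \<mu> = (\<Sum>i<m. a i - \<mu>) / real m"
      by (simp_all add: mult.commute)
    then have "\<bar>(\<Sum>i<m. a i) / real m - \<mu>\<bar> < r"
      using mpos by (simp only: eq abs_divide abs_of_pos divide_less_eq) simp
    then show "norm ((\<Sum>i<m. a i) / real m - \<mu>) < r" by simp
  qed
qed

lemma count_le:
  fixes x :: real
  assumes "x \<ge> 0"
  shows "(\<Sum>i<n. indicator {y. y > real (Suc i)} x) \<le> x"
proof (induction n)
  case 0 then show ?case using assms by simp
next
  case (Suc n)
  show ?case
  proof (cases "x > real (Suc n)")
    case True
    have "(\<Sum>i<n. indicator {y. y > real (Suc i)} x :: real) \<le> (\<Sum>i<n. 1)"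
      by (intro sum_mono) (auto simp: indicator_def)
    then have "(\<Sum>i<n. indicator {y. y > real (Suc i)} x :: real) \<le> real n" by simp
    then show ?thesis using True by (simp add: indicator_def)
  next
    case False then show ?thesis using Suc.IH by (simp add: indicator_def)
  qed
qed

lemma sq_tail_bound:
  fixes x :: real
  assumes "x \<ge> 0"
  shows "(\<Sum>i<n. (if x \<le> real (Suc i) then x\<^sup>2 / (real (Suc i))\<^sup>2 else 0)) \<le> 2 * x"
proof -
  define \<phi> where "\<phi> k = 1 / max (real k) x" for k :: nat
  have trm: "(if x \<le> real (Suc i) then x\<^sup>2 / (real (Suc i))\<^sup>2 else 0) \<le> 2 * x\<^sup>2 * (\<phi> (Suc i) - \<phi> (Suc (Suc i)))" for i
  proof (cases "x \<le> real (Suc i)")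
    case True
    define k where "k = real (Suc i)"
    have k1: "k \<ge> 1" unfolding k_def by simp
    have "\<phi> (Suc i) = 1/k" "\<phi> (Suc (Suc i)) = 1/(k+1)"
      using True unfolding \<phi>_def k_def by auto
    moreover have "1 / k\<^sup>2 \<le> 2 * (1/k - 1/(k+1))"
    proof -
      have kp: "k > 0" "k + 1 > 0" using k1 by auto
      have e: "1/k - 1/(k+1) = 1/(k*(k+1))" using kp by (simp add: field_simps)
      have "k \<le> k * k" using mult_right_mono[of 1 k k] k1 by simp
      then have le: "k*(k+1) \<le> 2 * k\<^sup>2" by (simp add: power2_eq_square algebra_simps)
      have "1 / k\<^sup>2 \<le> 2 / (k*(k+1))"
        using le kp by (simp add: divide_simps)
      then show ?thesis unfolding e by simp
    qed
    ultimately have "x\<^sup>2 * (1 / k\<^sup>2) \<le> x\<^sup>2 * (2 * (\<phi> (Suc i) - \<phi> (Suc (Suc i))))"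
      by (intro mult_left_mono) auto
    then show ?thesis using True unfolding k_def by (simp add: algebra_simps)
  next
    case False
    then have "\<phi> (Suc i) = 1/x" "\<phi> (Suc (Suc i)) \<le> 1/x" unfolding \<phi>_def by (auto simp: max_def field_simps)
    then show ?thesis using False by simp
  qed
  have "(\<Sum>i<n. (if x \<le> real (Suc i) then x\<^sup>2 / (real (Suc i))\<^sup>2 else 0)) \<le> (\<Sum>i<n. 2 * x\<^sup>2 * (\<phi> (Suc i) - \<phi> (Suc (Suc i))))"
    by (intro sum_mono trm)
  also have "\<dots> = 2 * x\<^sup>2 * (\<phi> 1 - \<phi> (Suc n))"
    by (simp add: sum_distrib_left[symmetric] sum_lessThan_telescope'[of "\<lambda>k. \<phi> (Suc k)"])
  also have "\<dots> \<le> 2 * x\<^sup>2 * \<phi> 1"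
  proof -
    have "\<phi> (Suc n) \<ge> 0" unfolding \<phi>_def using assms by simp
    then show ?thesis by (simp add: mult_left_mono)
  qed
  also have "\<dots> \<le> 2 * x"
  proof (cases "x \<le> 1")
    case True
    then have "\<phi> 1 = 1" unfolding \<phi>_def by simp
    moreover have "x\<^sup>2 \<le> x" using True assms by (simp add: power2_eq_square mult_le_cancel_right1 mult_left_le)
    ultimately show ?thesis by simp
  next
    case False
    then have "\<phi> 1 = 1/x" unfolding \<phi>_def by simp
    then show ?thesis using False by (simp add: power2_eq_square)
  qed
  finally show ?thesis .
qed


lemma geo_partial_le: "(\<Sum>t<K. (1/4::real)^t) \<le> 2"
proof -
  have "(\<Sum>t<K. (1/4::real)^t) = (1 - (1/4)^K) / (1 - 1/4)" by (simp add: sum_gp_strict)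
  also have "\<dots> = (1 - (1/4)^K) * (4/3)" by simp
  also have "\<dots> \<le> 1 * (4/3)" by (intro mult_right_mono) auto
  finally show ?thesis by simp
qed

lemma geo_bound:
  fixes j i N :: nat
  assumes j: "j \<ge> 1"
  shows "(\<Sum>n\<in>{n\<in>{..<N}. i < j*2^n}. 1 / (real (j*2^n))\<^sup>2) \<le> 2 / (real (Suc i))\<^sup>2"
proof (cases "\<exists>n. i < j*2^n")
  case False
  then have E: "{n\<in>{..<N}. i < j*2^n} = {}" by auto
  show ?thesis by (simp only: E sum.empty) simp
next
  case True
  define n0 where "n0 = (LEAST n. i < j*2^n)"
  have n0: "i < j*2^n0" unfolding n0_def by (rule LeastI_ex[OF True])
  have n0le: "n0 \<le> n" if "i < j*2^n" for n unfolding n0_def by (rule Least_le) (rule that)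
  define c where "c = 1 / (real (Suc i))\<^sup>2"
  have sub: "{n\<in>{..<N}. i < j*2^n} \<subseteq> {n0..<N}" using n0le by auto
  have "(\<Sum>n\<in>{n\<in>{..<N}. i < j*2^n}. 1 / (real (j*2^n))\<^sup>2) \<le> (\<Sum>n\<in>{n0..<N}. 1 / (real (j*2^n))\<^sup>2)"
    by (rule sum_mono2[OF _ sub]) auto
  also have "\<dots> = (\<Sum>t\<in>{0..<N-n0}. 1 / (real (j*2^(n0+t)))\<^sup>2)"
    by (subst sum.atLeastLessThan_shift_0) (simp add: comp_def)
  also have "\<dots> \<le> (\<Sum>t\<in>{0..<N-n0}. c * (1/4)^t)"
  proof (intro sum_mono)
    fix t
    have A: "real (j*2^(n0+t)) = real (j*2^n0) * 2^t" by (simp add: power_add)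
    have B: "real (Suc i) \<le> real (j*2^n0)" using n0 by (simp only: of_nat_le_iff Suc_le_eq)
    have Bp: "real (Suc i) > 0" by simp
    have "1 / (real (j*2^n0))\<^sup>2 \<le> c" unfolding c_def
      using B Bp j by (intro divide_left_mono power_mono mult_pos_pos) auto
    then have "1 / (real (j*2^n0))\<^sup>2 * (1/4)^t \<le> c * (1/4)^t" by (intro mult_right_mono) auto
    moreover have "1 / (real (j*2^(n0+t)))\<^sup>2 = 1 / (real (j*2^n0))\<^sup>2 * (1/4)^t"
      unfolding A by (simp add: power_mult_distrib power_divide power2_eq_square power_mult[symmetric] field_simps flip: power_mult_distrib)
    ultimately show "1 / (real (j*2^(n0+t)))\<^sup>2 \<le> c * (1/4)^t" by simp
  qed
  also have "\<dots> = c * (\<Sum>t<N-n0. (1/4)^t)" by (simp add: sum_distrib_left atLeast0LessThan)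
  also have "\<dots> \<le> c * 2" using geo_partial_le by (intro mult_left_mono) (auto simp: c_def)
  finally show ?thesis by (simp add: c_def)
qed


lemma double_sum_bound:
  fixes v :: "nat \<Rightarrow> real" and j :: nat
  assumes j: "j \<ge> 1" and vnn: "\<And>i. v i \<ge> 0" and B: "\<And>n. (\<Sum>i<n. v i / (real (Suc i))\<^sup>2) \<le> B"
  shows "(\<Sum>n<N. (\<Sum>i<j*2^n. v i) / (real (j*2^n))\<^sup>2) \<le> 2 * B"
proof -
  define m where "m n = j*2^n" for n
  have mmono: "m n \<le> m N" if "n < N" for n unfolding m_def using that j by (intro mult_le_mono2 power_increasing) auto
  have "(\<Sum>n<N. (\<Sum>i<m n. v i) / (real (m n))\<^sup>2) = (\<Sum>n<N. \<Sum>i\<in>{i\<in>{..<m N}. i < m n}. v i / (real (m n))\<^sup>2)"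
  proof (rule sum.cong[OF refl])
    fix n assume "n \<in> {..<N}"
    then have "{i\<in>{..<m N}. i < m n} = {..<m n}" using mmono[of n] by auto
    then show "(\<Sum>i<m n. v i) / (real (m n))\<^sup>2 = (\<Sum>i\<in>{i\<in>{..<m N}. i < m n}. v i / (real (m n))\<^sup>2)"
      by (simp add: sum_divide_distrib)
  qed
  also have "\<dots> = (\<Sum>i<m N. \<Sum>n\<in>{n\<in>{..<N}. i < m n}. v i / (real (m n))\<^sup>2)"
    by (rule sum.swap_restrict) auto
  also have "\<dots> = (\<Sum>i<m N. v i * (\<Sum>n\<in>{n\<in>{..<N}. i < m n}. 1 / (real (m n))\<^sup>2))"
    by (simp add: sum_distrib_left)
  also have "\<dots> \<le> (\<Sum>i<m N. v i * (2 / (real (Suc i))\<^sup>2))"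
    by (intro sum_mono mult_left_mono vnn) (use geo_bound[OF j] in \<open>simp add: m_def\<close>)
  also have "\<dots> = 2 * (\<Sum>i<m N. v i / (real (Suc i))\<^sup>2)"
    by (simp add: sum_distrib_left mult.commute)
  also have "\<dots> \<le> 2 * B" using B by simp
  finally show ?thesis unfolding m_def .
qed


locale iid_nonneg = prob_space +
  fixes X :: "nat \<Rightarrow> 'a \<Rightarrow> real" and X0 :: "'a \<Rightarrow> real"
  assumes indep: "indep_vars (\<lambda>_. borel) X UNIV"
    and dist: "\<And>i. distr M borel (X i) = distr M borel X0"
    and X0m[measurable]: "X0 \<in> borel_measurable M"
    and int0: "integrable M X0"
    and nn: "\<And>i w. 0 \<le> X i w"
    and nn0: "\<And>w. 0 \<le> X0 w"
begin

lemma Xm[measurable]: "X i \<in> borel_measurable M"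
  using indep unfolding indep_vars_def by auto

lemma transfer_integral:
  fixes g :: "real \<Rightarrow> real"
  assumes [measurable]: "g \<in> borel_measurable borel"
  shows "expectation (\<lambda>w. g (X i w)) = expectation (\<lambda>w. g (X0 w))"
proof -
  have "expectation (\<lambda>w. g (X i w)) = integral\<^sup>L (distr M borel (X i)) g"
    by (rule integral_distr[where g="X i" and N=borel and f=g, symmetric]) auto
  also have "\<dots> = integral\<^sup>L (distr M borel X0) g" by (simp only: dist)
  also have "\<dots> = expectation (\<lambda>w. g (X0 w))" by (rule integral_distr[where g=X0 and N=borel and f=g]) auto
  finally show ?thesis .
qed

lemma transfer_prob:
  assumes [measurable]: "A \<in> sets borel"
  shows "prob {w\<in>space M. X i w \<in> A} = prob {w\<in>space M. X0 w \<in> A}"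
proof -
  have "prob {w\<in>space M. X i w \<in> A} = measure (distr M borel (X i)) A"
    by (subst measure_distr) (auto simp: vimage_def Int_def conj_commute)
  also have "\<dots> = measure (distr M borel X0) A" by (simp only: dist)
  also have "\<dots> = prob {w\<in>space M. X0 w \<in> A}"
    by (subst measure_distr) (auto simp: vimage_def Int_def conj_commute)
  finally show ?thesis .
qed

definition g :: "nat \<Rightarrow> real \<Rightarrow> real" where
  "g i x = (if x \<le> real (Suc i) then x else 0)"

lemma g_meas[measurable]: "g i \<in> borel_measurable borel"
  unfolding g_def by measurable

definition T :: "nat \<Rightarrow> 'a \<Rightarrow> real" where
  "T i w = g i (X i w)"

lemma Tm[measurable]: "T i \<in> borel_measurable M"
  unfolding T_def by measurable

lemma T_bound: "\<bar>T i w\<bar> \<le> real (Suc i)"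
  unfolding T_def g_def using nn[of i w] by auto

lemma T_int[simp]: "integrable M (T i)"
proof (rule integrable_const_bound[where B="real (Suc i)"])
  show "AE w in M. norm (T i w) \<le> real (Suc i)" by (intro AE_I2) (simp only: real_norm_def T_bound)
qed simp

lemma T2_int[simp]: "integrable M (\<lambda>w. (T i w)\<^sup>2)"
proof (rule integrable_const_bound[where B="(real (Suc i))\<^sup>2"])
  show "AE w in M. norm ((T i w)\<^sup>2) \<le> (real (Suc i))\<^sup>2"
  proof (rule AE_I2)
    fix w
    have "\<bar>T i w\<bar> \<le> \<bar>real (Suc i)\<bar>" using T_bound[of i w] by simp
    then have "(T i w)\<^sup>2 \<le> (real (Suc i))\<^sup>2" by (simp only: abs_le_square_iff)
    then show "norm ((T i w)\<^sup>2) \<le> (real (Suc i))\<^sup>2" by simp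
  qed
qed auto

definition \<mu> where "\<mu> = expectation X0"

lemma ET_lim: "(\<lambda>i. expectation (T i)) \<longlonglongrightarrow> \<mu>"
proof -
  have eq: "expectation (T i) = expectation (\<lambda>w. g i (X0 w))" for i
    unfolding T_def by (rule transfer_integral) simp
  have "(\<lambda>i. expectation (\<lambda>w. g i (X0 w))) \<longlonglongrightarrow> expectation X0"
  proof (rule integral_dominated_convergence[where w=X0])
    show "AE w in M. (\<lambda>i. g i (X0 w)) \<longlonglongrightarrow> X0 w"
    proof (rule AE_I2)
      fix w
      obtain N :: nat where "X0 w \<le> real N" using real_arch_simple by blast
      then have "\<forall>i\<ge>N. g i (X0 w) = X0 w" unfolding g_def by auto
      then show "(\<lambda>i. g i (X0 w)) \<longlonglongrightarrow> X0 w"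
        by (intro tendsto_eventually) (auto simp: eventually_sequentially)
    qed
    show "AE w in M. norm (g i (X0 w)) \<le> X0 w" for i
      using nn0 by (auto simp: g_def)
  qed (auto simp: int0)
  then show ?thesis unfolding eq \<mu>_def .
qed

lemma BC1: "AE w in M. \<forall>\<^sub>F i in sequentially. X i w = T i w"
proof -
  define A where "A i = {w\<in>space M. X i w > real (Suc i)}" for i
  have [measurable]: "A i \<in> sets M" for i unfolding A_def by measurable
  have PA: "measure M (A i) = expectation (indicator {w\<in>space M. X0 w > real (Suc i)})" for i
  proof -
    have "measure M (A i) = prob {w\<in>space M. X i w \<in> {y. y > real (Suc i)}}"
      unfolding A_def by simp
    also have "\<dots> = prob {w\<in>space M. X0 w \<in> {y. y > real (Suc i)}}"
      by (rule transfer_prob) measurable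
    finally show ?thesis by simp
  qed
  have "summable (\<lambda>i. measure M (A i))"
  proof (rule summableI_nonneg_bounded)
    fix n
    have "(\<Sum>i<n. measure M (A i)) = (\<Sum>i<n. expectation (indicator {w\<in>space M. X0 w > real (Suc i)}))"
      by (simp add: PA)
    also have "\<dots> = expectation (\<lambda>w. \<Sum>i<n. indicator {w\<in>space M. X0 w > real (Suc i)} w)"
      by (rule Bochner_Integration.integral_sum[symmetric])
         (auto intro!: integrable_real_indicator simp: less_top[symmetric])
    also have "\<dots> \<le> expectation X0"
    proof (rule integral_mono)
      show "integrable M (\<lambda>w. \<Sum>i<n. indicator {w\<in>space M. X0 w > real (Suc i)} w :: real)"
        by (intro Bochner_Integration.integrable_sum integrable_real_indicator) (auto simp: less_top[symmetric])
      show "integrable M X0" by (rule int0)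
      fix w assume "w \<in> space M"
      then show "(\<Sum>i<n. indicator {w\<in>space M. X0 w > real (Suc i)} w) \<le> X0 w"
        using count_le[OF nn0[of w], of n] by (simp add: indicator_def)
    qed
    finally show "(\<Sum>i<n. measure M (A i)) \<le> expectation X0" .
  qed simp
  then have "AE w in M. \<forall>\<^sub>F i in sequentially. w \<in> space M - A i"
    by (intro borel_cantelli_AE1) (auto simp: less_top[symmetric])
  then show ?thesis
    by (rule AE_mp) (auto intro!: AE_I2 elim!: eventually_mono simp: A_def T_def g_def)
qed


definition D :: "nat \<Rightarrow> 'a \<Rightarrow> real" where
  "D i w = T i w - expectation (T i)"

lemma Dm[measurable]: "D i \<in> borel_measurable M"
  unfolding D_def by measurable

lemma D_bound: "\<bar>D i w\<bar> \<le> real (Suc i) + \<bar>expectation (T i)\<bar>"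
  unfolding D_def using T_bound[of i w] by linarith

lemma D_int[simp]: "integrable M (D i)"
  unfolding D_def by simp

lemma DD_int[simp]: "integrable M (\<lambda>w. D i w * D k w)"
proof (rule integrable_const_bound[where B="(real (Suc i) + \<bar>expectation (T i)\<bar>) * (real (Suc k) + \<bar>expectation (T k)\<bar>)"])
  show "AE w in M. norm (D i w * D k w) \<le> (real (Suc i) + \<bar>expectation (T i)\<bar>) * (real (Suc k) + \<bar>expectation (T k)\<bar>)"
  proof (rule AE_I2)
    fix w
    have "\<bar>D i w * D k w\<bar> = \<bar>D i w\<bar> * \<bar>D k w\<bar>" by (simp add: abs_mult)
    also have "\<dots> \<le> (real (Suc i) + \<bar>expectation (T i)\<bar>) * (real (Suc k) + \<bar>expectation (T k)\<bar>)"
      by (intro mult_mono D_bound) auto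
    finally show "norm (D i w * D k w) \<le> (real (Suc i) + \<bar>expectation (T i)\<bar>) * (real (Suc k) + \<bar>expectation (T k)\<bar>)"
      by simp
  qed
qed simp

lemma E_D[simp]: "expectation (D i) = 0"
  unfolding D_def by (simp add: prob_space)

lemma D_indep: "indep_vars (\<lambda>_. borel) D UNIV"
proof -
  have "indep_vars (\<lambda>_. borel) (\<lambda>i w. (\<lambda>x. g i x - expectation (T i)) (X i w)) UNIV"
    by (rule indep_vars_compose2[OF indep]) measurable
  moreover have "(\<lambda>i w. (\<lambda>x. g i x - expectation (T i)) (X i w)) = D"
    by (auto simp: D_def T_def fun_eq_iff)
  ultimately show ?thesis by simp
qed

lemma ED_prod: "i \<noteq> k \<Longrightarrow> expectation (\<lambda>w. D i w * D k w) = 0"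
proof -
  assume ik: "i \<noteq> k"
  have ind: "indep_vars (\<lambda>_. borel) D {i, k}"
    by (rule indep_vars_subset[OF D_indep]) auto
  have "expectation (\<lambda>w. \<Prod>l\<in>{i,k}. D l w) = (\<Prod>l\<in>{i,k}. expectation (D l))"
    by (rule indep_vars_lebesgue_integral[OF _ ind]) auto
  then show ?thesis using ik by simp
qed

lemma ES2:
  assumes "finite I"
  shows "expectation (\<lambda>w. (\<Sum>i\<in>I. D i w)\<^sup>2) \<le> (\<Sum>i\<in>I. expectation (\<lambda>w. (T i w)\<^sup>2))"
proof -
  have "expectation (\<lambda>w. (\<Sum>i\<in>I. D i w)\<^sup>2) = expectation (\<lambda>w. \<Sum>i\<in>I. \<Sum>k\<in>I. D i w * D k w)"
    by (simp add: power2_eq_square sum_product)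
  also have "\<dots> = (\<Sum>i\<in>I. \<Sum>k\<in>I. expectation (\<lambda>w. D i w * D k w))"
    by (simp add: Bochner_Integration.integral_sum Bochner_Integration.integrable_sum)
  also have "\<dots> = (\<Sum>i\<in>I. expectation (\<lambda>w. D i w * D i w))"
  proof (rule sum.cong[OF refl])
    fix i assume i: "i \<in> I"
    have "(\<Sum>k\<in>I. expectation (\<lambda>w. D i w * D k w)) = expectation (\<lambda>w. D i w * D i w) + (\<Sum>k\<in>I - {i}. expectation (\<lambda>w. D i w * D k w))"
      using assms i by (simp add: sum.remove)
    also have "(\<Sum>k\<in>I - {i}. expectation (\<lambda>w. D i w * D k w)) = 0"
      by (intro sum.neutral) (auto intro: ED_prod)
    finally show "(\<Sum>k\<in>I. expectation (\<lambda>w. D i w * D k w)) = expectation (\<lambda>w. D i w * D i w)" by simp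
  qed
  also have "\<dots> \<le> (\<Sum>i\<in>I. expectation (\<lambda>w. (T i w)\<^sup>2))"
  proof (rule sum_mono)
    fix i
    have "expectation (\<lambda>w. D i w * D i w) = variance (T i)"
      unfolding D_def by (simp add: power2_eq_square)
    also have "\<dots> = expectation (\<lambda>w. (T i w)\<^sup>2) - (expectation (T i))\<^sup>2"
      by (rule variance_eq) auto
    finally show "expectation (\<lambda>w. D i w * D i w) \<le> expectation (\<lambda>w. (T i w)\<^sup>2)" by simp
  qed
  finally show ?thesis .
qed

lemma cheb:
  assumes "finite I" "a > 0"
  shows "prob {w\<in>space M. a \<le> \<bar>\<Sum>i\<in>I. D i w\<bar>} \<le> (\<Sum>i\<in>I. expectation (\<lambda>w. (T i w)\<^sup>2)) / a\<^sup>2"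
proof -
  define f where "f w = (\<Sum>i\<in>I. D i w)" for w
  have [measurable]: "f \<in> borel_measurable M" unfolding f_def by measurable
  have Ef: "expectation f = 0" unfolding f_def
    by (simp add: Bochner_Integration.integral_sum)
  have f2: "integrable M (\<lambda>w. (f w)\<^sup>2)"
    unfolding f_def by (simp add: power2_eq_square sum_product Bochner_Integration.integrable_sum)
  have "prob {w\<in>space M. \<bar>f w - expectation f\<bar> \<ge> a} \<le> variance f / a\<^sup>2"
    by (rule Chebyshev_inequality) (auto simp: f2 assms)
  also have "variance f = expectation (\<lambda>w. (f w)\<^sup>2)" by (simp add: Ef)
  also have "\<dots> \<le> (\<Sum>i\<in>I. expectation (\<lambda>w. (T i w)\<^sup>2))" unfolding f_def by (rule ES2[OF assms(1)])
  finally show ?thesis using assms(2) by (simp add: Ef f_def divide_right_mono)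
qed


lemma v_nn: "expectation (\<lambda>w. (T i w)\<^sup>2) \<ge> 0"
  by (intro integral_nonneg_AE) auto

lemma v_sum_bound: "(\<Sum>i<n. expectation (\<lambda>w. (T i w)\<^sup>2) / (real (Suc i))\<^sup>2) \<le> 2 * \<mu>"
proof -
  have tr: "expectation (\<lambda>w. (T i w)\<^sup>2) = expectation (\<lambda>w. (g i (X0 w))\<^sup>2)" for i
    unfolding T_def by (rule transfer_integral[where g="\<lambda>x. (g i x)\<^sup>2"]) simp
  have gi_int: "integrable M (\<lambda>w. (g i (X0 w))\<^sup>2 / (real (Suc i))\<^sup>2)" for i
  proof (rule integrable_const_bound[where B="1"])
    show "AE w in M. norm ((g i (X0 w))\<^sup>2 / (real (Suc i))\<^sup>2) \<le> 1"
    proof (rule AE_I2)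
      fix w
      have "\<bar>g i (X0 w)\<bar> \<le> \<bar>real (Suc i)\<bar>" using nn0[of w] by (auto simp: g_def)
      then have "(g i (X0 w))\<^sup>2 \<le> (real (Suc i))\<^sup>2" by (simp only: abs_le_square_iff)
      then show "norm ((g i (X0 w))\<^sup>2 / (real (Suc i))\<^sup>2) \<le> 1" by simp
    qed
  qed simp
  have "(\<Sum>i<n. expectation (\<lambda>w. (T i w)\<^sup>2) / (real (Suc i))\<^sup>2)
      = (\<Sum>i<n. expectation (\<lambda>w. (g i (X0 w))\<^sup>2 / (real (Suc i))\<^sup>2))"
    by (simp add: tr)
  also have "\<dots> = expectation (\<lambda>w. \<Sum>i<n. (g i (X0 w))\<^sup>2 / (real (Suc i))\<^sup>2)"
    by (rule Bochner_Integration.integral_sum[symmetric]) (rule gi_int)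
  also have "\<dots> \<le> expectation (\<lambda>w. 2 * X0 w)"
  proof (rule integral_mono)
    show "integrable M (\<lambda>w. \<Sum>i<n. (g i (X0 w))\<^sup>2 / (real (Suc i))\<^sup>2)"
      by (intro Bochner_Integration.integrable_sum gi_int)
    show "integrable M (\<lambda>w. 2 * X0 w)" using int0 by simp
    fix w
    have "(\<Sum>i<n. (g i (X0 w))\<^sup>2 / (real (Suc i))\<^sup>2) = (\<Sum>i<n. (if X0 w \<le> real (Suc i) then (X0 w)\<^sup>2 / (real (Suc i))\<^sup>2 else 0))"
      by (intro sum.cong) (auto simp: g_def)
    also have "\<dots> \<le> 2 * X0 w" by (rule sq_tail_bound[OF nn0])
    finally show "(\<Sum>i<n. (g i (X0 w))\<^sup>2 / (real (Suc i))\<^sup>2) \<le> 2 * X0 w" .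
  qed
  also have "\<dots> = 2 * \<mu>" unfolding \<mu>_def by simp
  finally show ?thesis .
qed

lemma summ_sub:
  assumes j: "j \<ge> 1" and e: "\<epsilon> > 0"
  shows "summable (\<lambda>n. prob {w\<in>space M. \<epsilon> * real (j*2^n) \<le> \<bar>\<Sum>i<j*2^n. D i w\<bar>})"
proof (rule summableI_nonneg_bounded)
  fix N
  have "(\<Sum>n<N. prob {w\<in>space M. \<epsilon> * real (j*2^n) \<le> \<bar>\<Sum>i<j*2^n. D i w\<bar>})
       \<le> (\<Sum>n<N. (\<Sum>i<j*2^n. expectation (\<lambda>w. (T i w)\<^sup>2)) / (\<epsilon> * real (j*2^n))\<^sup>2)"
  proof (rule sum_mono)
    fix n
    have "0 < real (j*2^n)" using j by simp
    then show "prob {w\<in>space M. \<epsilon> * real (j*2^n) \<le> \<bar>\<Sum>i<j*2^n. D i w\<bar>}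
       \<le> (\<Sum>i<j*2^n. expectation (\<lambda>w. (T i w)\<^sup>2)) / (\<epsilon> * real (j*2^n))\<^sup>2"
      using e by (intro cheb) auto
  qed
  also have "\<dots> = (\<Sum>n<N. (1 / \<epsilon>\<^sup>2) * ((\<Sum>i<j*2^n. expectation (\<lambda>w. (T i w)\<^sup>2)) / (real (j*2^n))\<^sup>2))"
    by (intro sum.cong refl) (simp add: power_mult_distrib)
  also have "\<dots> = (1 / \<epsilon>\<^sup>2) * (\<Sum>n<N. (\<Sum>i<j*2^n. expectation (\<lambda>w. (T i w)\<^sup>2)) / (real (j*2^n))\<^sup>2)"
    by (rule sum_distrib_left[symmetric])
  also have "\<dots> \<le> (1 / \<epsilon>\<^sup>2) * (2 * (2 * \<mu>))"
    by (intro mult_left_mono double_sum_bound[OF j] v_nn v_sum_bound) auto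
  finally show "(\<Sum>n<N. prob {w\<in>space M. \<epsilon> * real (j*2^n) \<le> \<bar>\<Sum>i<j*2^n. D i w\<bar>}) \<le> (1 / \<epsilon>\<^sup>2) * (2 * (2 * \<mu>))" .
qed simp

lemma BC2: "AE w in M. \<forall>j\<ge>1. (\<lambda>n. (\<Sum>i<j*2^n. D i w) / real (j*2^n)) \<longlonglongrightarrow> 0"
proof -
  have "AE w in M. \<forall>\<^sub>F n in sequentially. w \<in> space M - {w\<in>space M. (1 / real (Suc k)) * real (j*2^n) \<le> \<bar>\<Sum>i<j*2^n. D i w\<bar>}"
    if "j \<ge> 1" for j k
  proof (rule borel_cantelli_AE1)
    show "summable (\<lambda>n. prob {w\<in>space M. (1 / real (Suc k)) * real (j*2^n) \<le> \<bar>\<Sum>i<j*2^n. D i w\<bar>})"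
      by (rule summ_sub[OF that]) simp
  qed (auto simp: less_top[symmetric])
  then have "\<forall>k j. AE w in M. j \<ge> 1 \<longrightarrow> (\<forall>\<^sub>F n in sequentially. \<bar>\<Sum>i<j*2^n. D i w\<bar> < (1 / real (Suc k)) * real (j*2^n))"
    by (auto elim!: AE_mp intro!: AE_I2 elim: eventually_mono simp: not_le)
  then have "AE w in M. \<forall>k j. j \<ge> 1 \<longrightarrow> (\<forall>\<^sub>F n in sequentially. \<bar>\<Sum>i<j*2^n. D i w\<bar> < (1 / real (Suc k)) * real (j*2^n))"
    by (simp add: AE_all_countable)
  then show ?thesis
  proof (rule AE_mp, intro AE_I2 impI allI)
    fix w and j :: nat assume j: "j \<ge> 1" and H: "\<forall>k j. j \<ge> 1 \<longrightarrow> (\<forall>\<^sub>F n in sequentially. \<bar>\<Sum>i<j*2^n. D i w\<bar> < (1 / real (Suc k)) * real (j*2^n))"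
    show "(\<lambda>n. (\<Sum>i<j*2^n. D i w) / real (j*2^n)) \<longlonglongrightarrow> 0"
    proof (rule LIMSEQ_I)
      fix r :: real assume "r > 0"
      obtain k where k: "1 / real (Suc k) < r" using reals_Archimedean \<open>r>0\<close> by (metis of_nat_Suc inverse_eq_divide)
      have "\<forall>\<^sub>F n in sequentially. norm ((\<Sum>i<j*2^n. D i w) / real (j*2^n) - 0) < r"
        using H[rule_format, OF j, of k]
      proof (rule eventually_mono)
        fix n assume n: "\<bar>\<Sum>i<j*2^n. D i w\<bar> < (1 / real (Suc k)) * real (j*2^n)"
        have p: "real (j*2^n) > 0" using j by simp
        have "\<bar>\<Sum>i<j*2^n. D i w\<bar> / real (j*2^n) < 1 / real (Suc k)"
          using n p by (simp add: divide_less_eq)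
        then show "norm ((\<Sum>i<j*2^n. D i w) / real (j*2^n) - 0) < r"
          using k p by (simp add: abs_divide)
      qed
      then show "\<exists>no. \<forall>n\<ge>no. norm ((\<Sum>i<j*2^n. D i w) / real (j*2^n) - 0) < r"
        by (simp add: eventually_sequentially)
    qed
  qed
qed


lemma eventually_zero_avg:
  fixes d :: "nat \<Rightarrow> real"
  assumes "\<forall>\<^sub>F i in sequentially. d i = 0"
  shows "(\<lambda>m. (\<Sum>i<m. d i) / real m) \<longlonglongrightarrow> 0"
proof -
  obtain N where N: "\<And>i. i \<ge> N \<Longrightarrow> d i = 0" using assms by (auto simp: eventually_sequentially)
  have "\<forall>\<^sub>F m in sequentially. (\<Sum>i<N. d i) / real m = (\<Sum>i<m. d i) / real m"
  proof (rule eventually_sequentiallyI[of N])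
    fix m assume m: "m \<ge> N"
    have sp: "{..<m} = {..<N} \<union> {N..<m}" using m by auto
    have "(\<Sum>i<m. d i) = (\<Sum>i<N. d i) + (\<Sum>i\<in>{N..<m}. d i)" unfolding sp by (subst sum.union_disjoint) auto
    also have "(\<Sum>i\<in>{N..<m}. d i) = 0" using N by (intro sum.neutral) auto
    finally show "(\<Sum>i<N. d i) / real m = (\<Sum>i<m. d i) / real m" by simp
  qed
  moreover have "(\<lambda>m. (\<Sum>i<N. d i) / real m) \<longlonglongrightarrow> 0" by (rule lim_const_over_n)
  ultimately show ?thesis by (rule Lim_transform_eventually[rotated])
qed

lemma subseq_lim:
  fixes f :: "nat \<Rightarrow> real"
  assumes "f \<longlonglongrightarrow> L" "j \<ge> 1"
  shows "(\<lambda>n. f (j*2^n)) \<longlonglongrightarrow> L"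
proof -
  have "strict_mono (\<lambda>n::nat. j*2^n)" using assms(2) by (intro strict_monoI_Suc) auto
  from LIMSEQ_subseq_LIMSEQ[OF assms(1) this] show ?thesis by (simp add: comp_def)
qed

theorem slln_nonneg: "AE w in M. (\<lambda>m. (\<Sum>i<m. X i w) / real m) \<longlonglongrightarrow> \<mu>"
  using BC1 BC2
proof (rule AE_mp[OF AE_conjI], intro AE_I2 impI, elim conjE)
  fix w
  assume E1: "\<forall>\<^sub>F i in sequentially. X i w = T i w"
    and E2: "\<forall>j\<ge>1. (\<lambda>n. (\<Sum>i<j*2^n. D i w) / real (j*2^n)) \<longlonglongrightarrow> 0"
  show "(\<lambda>m. (\<Sum>i<m. X i w) / real m) \<longlonglongrightarrow> \<mu>"
  proof (rule interp_limit)
    show "(\<Sum>i<m. X i w) \<le> (\<Sum>i<Suc m. X i w)" for m using nn[of m w] by simp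
    show "0 \<le> (\<Sum>i<m. X i w)" for m by (intro sum_nonneg nn)
    fix j :: nat assume j: "j \<ge> 1"
    have A: "(\<lambda>n. (\<Sum>i<j*2^n. X i w - T i w) / real (j*2^n)) \<longlonglongrightarrow> 0"
      by (rule subseq_lim[OF eventually_zero_avg j]) (use E1 in \<open>auto elim: eventually_mono\<close>)
    have C: "(\<lambda>n. (\<Sum>i<j*2^n. expectation (T i)) / real (j*2^n)) \<longlonglongrightarrow> \<mu>"
      by (rule subseq_lim[OF cesaro_limit[OF ET_lim] j])
    have B: "(\<lambda>n. (\<Sum>i<j*2^n. D i w) / real (j*2^n)) \<longlonglongrightarrow> 0" using E2 j by auto
    have eq: "(\<Sum>i<m. X i w) / real m = (\<Sum>i<m. X i w - T i w) / real m + (\<Sum>i<m. D i w) / real m + (\<Sum>i<m. expectation (T i)) / real m" for m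
      unfolding D_def by (simp add: sum_subtractf add_divide_distrib[symmetric] diff_divide_distrib[symmetric])
    show "(\<lambda>n. (\<Sum>i<j*2^n. X i w) / real (j*2^n)) \<longlonglongrightarrow> \<mu>"
      unfolding eq using tendsto_add[OF tendsto_add[OF A B] C] by simp
  qed
qed

end

theorem slln:
  fixes Z :: "nat \<Rightarrow> 'a \<Rightarrow> real" and Z0 :: "'a \<Rightarrow> real"
  assumes P: "prob_space M"
    and indep: "prob_space.indep_vars M (\<lambda>_. borel) Z UNIV"
    and dist: "\<And>i. distr M borel (Z i) = distr M borel Z0"
    and Z0m: "Z0 \<in> borel_measurable M"
    and int0: "integrable M Z0"
  shows "AE w in M. (\<lambda>m. (\<Sum>i<m. Z i w) / real m) \<longlonglongrightarrow> integral\<^sup>L M Z0"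
proof -
  interpret prob_space M by (rule P)
  have Zm[measurable]: "Z i \<in> borel_measurable M" for i using indep unfolding indep_vars_def by auto
  note Z0m[measurable]
  have distf: "distr M borel (\<lambda>w. f (Z i w)) = distr M borel (\<lambda>w. f (Z0 w))" if [measurable]: "f \<in> borel_measurable borel" for f i
  proof -
    have "distr M borel (\<lambda>w. f (Z i w)) = distr (distr M borel (Z i)) borel f"
      by (subst distr_distr) (auto simp: comp_def)
    also have "\<dots> = distr (distr M borel Z0) borel f" by (simp only: dist)
    also have "\<dots> = distr M borel (\<lambda>w. f (Z0 w))"
      by (subst distr_distr) (auto simp: comp_def)
    finally show ?thesis .
  qed
  interpret pos: iid_nonneg M "\<lambda>i w. max 0 (Z i w)" "\<lambda>w. max 0 (Z0 w)"
  proof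
    show "indep_vars (\<lambda>_. borel) (\<lambda>i w. max 0 (Z i w)) UNIV"
      by (rule indep_vars_compose2[OF indep, where Y="\<lambda>_ x. max 0 x"]) measurable
    show "distr M borel (\<lambda>w. max 0 (Z i w)) = distr M borel (\<lambda>w. max 0 (Z0 w))" for i
      by (rule distf) measurable
  qed (auto simp: int0)
  interpret neg: iid_nonneg M "\<lambda>i w. max 0 (- Z i w)" "\<lambda>w. max 0 (- Z0 w)"
  proof
    show "indep_vars (\<lambda>_. borel) (\<lambda>i w. max 0 (- Z i w)) UNIV"
      by (rule indep_vars_compose2[OF indep, where Y="\<lambda>_ x. max 0 (- x)"]) measurable
    show "distr M borel (\<lambda>w. max 0 (- Z i w)) = distr M borel (\<lambda>w. max 0 (- Z0 w))" for i
      by (rule distf) measurable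
  qed (auto simp: int0)
  have E: "integral\<^sup>L M Z0 = pos.\<mu> - neg.\<mu>"
  proof -
    have "integral\<^sup>L M Z0 = expectation (\<lambda>w. max 0 (Z0 w) - max 0 (- Z0 w))"
      by (intro Bochner_Integration.integral_cong) auto
    also have "\<dots> = pos.\<mu> - neg.\<mu>" unfolding pos.\<mu>_def neg.\<mu>_def
      by (rule Bochner_Integration.integral_diff) (auto simp: int0)
    finally show ?thesis .
  qed
  show ?thesis
    using pos.slln_nonneg neg.slln_nonneg
  proof (rule AE_mp[OF AE_conjI], intro AE_I2 impI, elim conjE)
    fix w
    assume a: "(\<lambda>m. (\<Sum>i<m. max 0 (Z i w)) / real m) \<longlonglongrightarrow> pos.\<mu>"
      and b: "(\<lambda>m. (\<Sum>i<m. max 0 (- Z i w)) / real m) \<longlonglongrightarrow> neg.\<mu>"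
    have eq: "(\<Sum>i<m. Z i w) / real m = (\<Sum>i<m. max 0 (Z i w)) / real m - (\<Sum>i<m. max 0 (- Z i w)) / real m" for m
    proof -
      have "(\<Sum>i<m. Z i w) = (\<Sum>i<m. max 0 (Z i w) - max 0 (- Z i w))" by (intro sum.cong) auto
      then show ?thesis by (simp add: sum_subtractf diff_divide_distrib)
    qed
    show "(\<lambda>m. (\<Sum>i<m. Z i w) / real m) \<longlonglongrightarrow> integral\<^sup>L M Z0"
      unfolding eq E by (rule tendsto_diff[OF a b])
  qed
qed


lemma quantile_props:
  assumes D: "real_distribution \<mu>" and u: "0 < u" "u < 1"
  shows "\<exists>q. quantile \<mu> u = ereal q \<and> measure \<mu> {..q} \<ge> u \<and> (\<forall>z<q. measure \<mu> {..z} < u)"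
proof -
  interpret real_distribution \<mu> by (rule D)
  define S where "S = {z. cdf \<mu> z \<ge> u}"
  have "\<forall>\<^sub>F z in at_top. cdf \<mu> z > u" using cdf_lim_at_top_prob u(2) by (rule order_tendstoD)
  then obtain z0 where z0: "cdf \<mu> z0 > u" by (auto simp: eventually_at_top_linorder)
  then have Sne: "S \<noteq> {}" unfolding S_def by (auto intro!: exI[of _ z0])
  have "\<forall>\<^sub>F z in at_bot. cdf \<mu> z < u" using cdf_lim_at_bot u(1) by (rule order_tendstoD)
  then obtain N where N: "\<And>z. z \<le> N \<Longrightarrow> cdf \<mu> z < u" by (auto simp: eventually_at_bot_linorder)
  have Slow: "s \<in> S \<Longrightarrow> N \<le> s" for s using N[of s] unfolding S_def by force
  have bdd: "bdd_below S" using Slow by (auto intro!: bdd_belowI)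
  define q where "q = Inf S"
  have Q: "quantile \<mu> u = ereal q"
    unfolding quantile_def q_def using ereal_Inf'[OF bdd Sne] by (simp add: S_def cdf_def)
  have below: "cdf \<mu> z < u" if "z < q" for z
  proof (rule ccontr)
    assume "\<not> cdf \<mu> z < u"
    then have "z \<in> S" unfolding S_def by simp
    then have "q \<le> z" unfolding q_def by (rule cInf_lower[OF _ bdd])
    then show False using that by simp
  qed
  have qS: "cdf \<mu> q \<ge> u"
  proof -
    have lim: "(cdf \<mu> \<longlongrightarrow> cdf \<mu> q) (at_right q)"
      using cdf_is_right_cont[of q] by (simp add: continuous_within)
    have "\<forall>\<^sub>F z in at_right q. u \<le> cdf \<mu> z"
    proof (rule eventually_at_rightI[of q "q+1"])
      fix z assume "z \<in> {q<..<q+1}"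
      then have "Inf S < z" unfolding q_def by simp
      then obtain s where s: "s \<in> S" "s < z" using cInf_less_iff[OF Sne bdd] by auto
      then show "u \<le> cdf \<mu> z" unfolding S_def using cdf_nondecreasing[of s z] by simp
    qed simp
    then show ?thesis by (intro tendsto_lowerbound[OF lim]) auto
  qed
  show ?thesis using Q qS below by (auto simp: cdf_def)
qed

lemma loss_cont: "continuous_on UNIV (loss x)"
  unfolding loss_def by (intro continuous_intros)

lemma loss_meas[measurable]: "loss x \<in> borel_measurable borel"
  unfolding loss_def by measurable

lemma VaR_props:
  assumes P: "prob_space M" and Ym[measurable]: "Y \<in> borel_measurable M" and b: "0 < \<beta>" "\<beta> < 1"
  shows "\<exists>q. VaR M Y \<beta> x = ereal q \<and> prob_space.prob M {w\<in>space M. loss x (Y w) \<le> q} \<ge> \<beta>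
      \<and> (\<forall>z<q. prob_space.prob M {w\<in>space M. loss x (Y w) \<le> z} < \<beta>)"
proof -
  interpret prob_space M by (rule P)
  have RD: "real_distribution (distr M borel (\<lambda>w. loss x (Y w)))"
    by (rule real_distribution.intro) (auto intro!: prob_space_distr simp: real_distribution_axioms_def)
  have m: "measure (distr M borel (\<lambda>w. loss x (Y w))) {..z} = prob {w\<in>space M. loss x (Y w) \<le> z}" for z
    by (subst measure_distr) (auto simp: vimage_def Int_def conj_commute)
  show ?thesis using quantile_props[OF RD b] unfolding VaR_def m .
qed


lemma exists_indep_dir:
  fixes x x1 x2 :: "'a::euclidean_space"
  assumes x: "x \<noteq> 0" and d: "x1 \<noteq> x2" and ind: "independent {x1, x2}"
  shows "x1 \<notin> span {x} \<or> x2 \<notin> span {x}"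
proof (rule ccontr)
  assume "\<not> (x1 \<notin> span {x} \<or> x2 \<notin> span {x})"
  then obtain a b where a: "x1 = a *\<^sub>R x" and b: "x2 = b *\<^sub>R x" by (auto simp: span_singleton)
  have "x1 \<noteq> 0" using ind by (metis dependent_zero insertI1)
  then have "a \<noteq> 0" using a by auto
  then have "x2 = (b / a) *\<^sub>R x1" using a b by simp
  then have "x2 \<in> span {x1}" by (auto simp: span_singleton)
  moreover have "{x1, x2} - {x2} = {x1}" using d by auto
  ultimately have "dependent {x1, x2}" unfolding dependent_def by (metis insertCI)
  then show False using ind by simp
qed

lemma open_point:
  fixes x x' :: "'a::euclidean_space"
  assumes x: "x \<noteq> 0" and x': "x' \<notin> span {x}" and ab: "a < b"
  shows "\<exists>y. a < loss x y \<and> loss x y < b \<and> c < loss x' y"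
proof -
  define w where "w = x' - ((x' \<bullet> x) / (x \<bullet> x)) *\<^sub>R x"
  have xx: "x \<bullet> x > 0" using x by simp
  have w0: "w \<noteq> 0"
  proof
    assume "w = 0"
    then have "x' = ((x' \<bullet> x) / (x \<bullet> x)) *\<^sub>R x" unfolding w_def by simp
    then have "x' \<in> span {x}" by (metis span_base span_scale singletonI)
    then show False using x' by simp
  qed
  have xw: "x \<bullet> w = 0" unfolding w_def using xx by (simp add: inner_diff_right inner_commute)
  have x'w: "x' \<bullet> w = w \<bullet> w"
  proof -
    have "w \<bullet> w = (x' - ((x' \<bullet> x) / (x \<bullet> x)) *\<^sub>R x) \<bullet> w" unfolding w_def[symmetric] ..
    also have "\<dots> = x' \<bullet> w - ((x' \<bullet> x) / (x \<bullet> x)) * (x \<bullet> w)" by (simp add: inner_diff_left)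
    finally show ?thesis using xw by simp
  qed
  have ww: "w \<bullet> w > 0" using w0 by simp
  define t where "t = (a + b) / 2"
  define \<alpha> where "\<alpha> = - t / (x \<bullet> x)"
  define \<gamma> where "\<gamma> = (- \<alpha> * (x' \<bullet> x) - c - 1) / (w \<bullet> w)"
  define y where "y = \<alpha> *\<^sub>R x + \<gamma> *\<^sub>R w"
  have "loss x y = - (\<alpha> * (x \<bullet> x) + \<gamma> * (x \<bullet> w))" unfolding loss_def y_def by (simp add: inner_add_right)
  also have "\<dots> = t" unfolding \<alpha>_def using xx xw by simp
  finally have "loss x y = t" .
  moreover have "loss x' y = c + 1"
  proof -
    have "loss x' y = - (\<alpha> * (x' \<bullet> x) + \<gamma> * (w \<bullet> w))"
      unfolding loss_def y_def using x'w by (simp add: inner_add_right inner_commute)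
    also have "\<dots> = c + 1" unfolding \<gamma>_def using ww by simp
    finally show ?thesis .
  qed
  ultimately show ?thesis using ab unfolding t_def by (intro exI[of _ y]) auto
qed

lemma agg_core:
  fixes M :: "'w measure" and Y :: "'w \<Rightarrow> 'a::euclidean_space"
  assumes P: "prob_space M" and Ym[measurable]: "Y \<in> borel_measurable M"
    and b: "0 < \<beta>" "\<beta> < 1"
    and supp: "support_of (distr M borel Y) = UNIV"
    and x12: "x1 \<in> X" "x2 \<in> X" "x1 \<noteq> x2" "independent {x1, x2}"
    and RR: "riskregion M Y \<beta> X \<subseteq> R" and Rb[measurable]: "R \<in> sets borel"
    and x: "x \<in> X" "x \<noteq> 0" and q: "VaR M Y \<beta> x = ereal q" and z: "z' < q"
  shows "measure M {w\<in>space M. Y w \<in> R \<and> z' < loss x (Y w) \<and> loss x (Y w) < q} > 0"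
proof -
  interpret prob_space M by (rule P)
  obtain x' where x': "x' \<in> X" "x' \<notin> span {x}" using exists_indep_dir[OF x(2) x12(3,4)] x12 by blast
  obtain q' where q': "VaR M Y \<beta> x' = ereal q'" using VaR_props[OF P Ym b, of x'] by blast
  obtain y0 where y0: "z' < loss x y0" "loss x y0 < q" "q' < loss x' y0"
    using open_point[OF x(2) x'(2) z] by blast
  define Op where "Op = {y. z' < loss x y} \<inter> {y. loss x y < q} \<inter> {y. q' < loss x' y}"
  have Oo: "open Op" unfolding Op_def
    by (intro open_Int open_Collect_less continuous_intros loss_cont)
  have Ob[measurable]: "Op \<in> sets borel" using Oo by simp
  have "y0 \<in> Op" using y0 unfolding Op_def by auto
  then have pos: "emeasure (distr M borel Y) Op > 0" using supp Oo unfolding support_of_def by auto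
  have OR: "Op \<subseteq> R"
  proof
    fix y assume "y \<in> Op"
    then have "ereal (loss x' y) \<ge> VaR M Y \<beta> x'" unfolding Op_def q' by auto
    then have "y \<in> riskregion_x M Y \<beta> x'" unfolding riskregion_x_def by simp
    then show "y \<in> R" using RR x'(1) unfolding riskregion_def by auto
  qed
  have "emeasure (distr M borel Y) Op = emeasure M (Y -` Op \<inter> space M)"
    by (rule emeasure_distr) auto
  then have "measure M (Y -` Op \<inter> space M) > 0" using pos
    by (simp add: emeasure_eq_measure)
  also have "measure M (Y -` Op \<inter> space M) \<le> measure M {w\<in>space M. Y w \<in> R \<and> z' < loss x (Y w) \<and> loss x (Y w) < q}"
    using OR by (intro finite_measure_mono) (auto simp: Op_def)
  finally show ?thesis .
qed


lemma loss_zero[simp]: "loss 0 y = 0" unfolding loss_def by simp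

lemma VaR_zero:
  assumes P: "prob_space M" and Ym[measurable]: "Y \<in> borel_measurable M" and b: "0 < \<beta>" "\<beta> < 1"
  shows "VaR M Y \<beta> 0 = ereal 0"
proof -
  interpret prob_space M by (rule P)
  obtain q where q: "VaR M Y \<beta> 0 = ereal q" "prob {w\<in>space M. loss 0 (Y w) \<le> q} \<ge> \<beta>"
    "\<forall>z<q. prob {w\<in>space M. loss 0 (Y w) \<le> z} < \<beta>"
    using VaR_props[OF P Ym b, of 0] by blast
  have "q \<ge> 0"
  proof (rule ccontr)
    assume "\<not> q \<ge> 0"
    then have "{w\<in>space M. loss 0 (Y w) \<le> q} = {}" by auto
    then show False using q(2) b by (simp only: measure_empty)
  qed
  moreover have "\<not> q > 0"
  proof
    assume "q > 0"
    then have "prob {w\<in>space M. loss 0 (Y w) \<le> 0} < \<beta>" using q(3) by auto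
    then show False using b prob_space by simp
  qed
  ultimately show ?thesis using q(1) by simp
qed

lemma agg_full:
  fixes M :: "'w measure" and Y :: "'w \<Rightarrow> 'a::euclidean_space"
  assumes P: "prob_space M" and Ym[measurable]: "Y \<in> borel_measurable M"
    and b: "0 < \<beta>" "\<beta> < 1"
    and supp: "support_of (distr M borel Y) = UNIV"
    and x12: "x1 \<in> X" "x2 \<in> X" "x1 \<noteq> x2" "independent {x1, x2}"
    and RR: "riskregion M Y \<beta> X \<subseteq> R" and Rb[measurable]: "R \<in> sets borel"
  shows "aggregation_condition M Y \<beta> X R"
  unfolding aggregation_condition_def
proof (intro conjI RR ballI allI impI)
  interpret prob_space M by (rule P)
  fix x z' assume x: "x \<in> X" and z: "ereal z' < VaR M Y \<beta> x"
  obtain q where q: "VaR M Y \<beta> x = ereal q" using VaR_props[OF P Ym b, of x] by blast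
  have zq: "z' < q" using z q by simp
  show "0 < measure M {w\<in>space M. Y w \<in> {y. ereal z' < ereal (loss x y) \<and> ereal (loss x y) \<le> VaR M Y \<beta> x} \<inter> R}"
  proof (cases "x = 0")
    case False
    have "0 < measure M {w\<in>space M. Y w \<in> R \<and> z' < loss x (Y w) \<and> loss x (Y w) < q}"
      by (rule agg_core[OF P Ym b supp x12 RR Rb x False q zq])
    also have "\<dots> \<le> measure M {w\<in>space M. Y w \<in> {y. ereal z' < ereal (loss x y) \<and> ereal (loss x y) \<le> VaR M Y \<beta> x} \<inter> R}"
      unfolding q by (intro finite_measure_mono) auto
    finally show ?thesis .
  next
    case True
    have V0: "VaR M Y \<beta> 0 = ereal 0" by (rule VaR_zero[OF P Ym b])
    have "UNIV \<subseteq> R"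
    proof
      fix y :: 'a
      have "y \<in> riskregion_x M Y \<beta> 0" unfolding riskregion_x_def V0 by simp
      then show "y \<in> R" using RR x True unfolding riskregion_def by auto
    qed
    then have "{w\<in>space M. Y w \<in> {y. ereal z' < ereal (loss x y) \<and> ereal (loss x y) \<le> VaR M Y \<beta> x} \<inter> R} = space M"
      using True V0 z by auto
    then show ?thesis using prob_space by simp
  qed
qed


lemma emp_law_basic:
  assumes m: "m > 0"
  shows "prob_space (emp_law g m)" "sets (emp_law g m) = sets borel"
    "measure (emp_law g m) {..z} = real (card {i\<in>{..<m}. g i \<le> z}) / real m"
proof -
  have ne: "{..<m} \<noteq> {}" "finite {..<m}" using m by auto
  show "prob_space (emp_law g m)" unfolding emp_law_def by (rule prob_space.prob_space_distr[OF prob_space_measure_pmf]) auto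
  show "sets (emp_law g m) = sets borel" unfolding emp_law_def by simp
  have "measure (emp_law g m) {..z} = measure (measure_pmf (pmf_of_set {..<m})) (g -` {..z})"
    unfolding emp_law_def by (subst measure_distr) auto
  also have "\<dots> = real (card ({..<m} \<inter> g -` {..z})) / real (card {..<m})"
    by (rule measure_pmf_of_set[OF ne])
  also have "{..<m} \<inter> g -` {..z} = {i\<in>{..<m}. g i \<le> z}" by auto
  finally show "measure (emp_law g m) {..z} = real (card {i\<in>{..<m}. g i \<le> z}) / real m" by simp
qed

lemma quantile_emp_eq:
  fixes g1 g2 :: "nat \<Rightarrow> real"
  assumes m: "m > 0"
    and diff: "\<And>i. i < m \<Longrightarrow> g1 i \<noteq> g2 i \<Longrightarrow> g1 i \<le> c \<and> g2 i \<le> c"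
    and cnt: "real (card {i\<in>{..<m}. g1 i \<le> c}) < \<beta> * real m"
    and u: "\<beta> \<le> u"
  shows "quantile (emp_law g1 m) u = quantile (emp_law g2 m) u"
proof -
  have mp: "real m > 0" using m by simp
  have sameset: "{i\<in>{..<m}. g1 i \<le> z} = {i\<in>{..<m}. g2 i \<le> z}" if "c \<le> z" for z
    using diff that by force
  have "{z. measure (emp_law g1 m) {..z} \<ge> u} = {z. measure (emp_law g2 m) {..z} \<ge> u}"
  proof (intro Collect_cong)
    fix z
    show "(measure (emp_law g1 m) {..z} \<ge> u) = (measure (emp_law g2 m) {..z} \<ge> u)"
    proof (cases "c \<le> z")
      case True then show ?thesis unfolding emp_law_basic(3)[OF m] sameset[OF True] by simp
    next
      case False
      have c1: "card {i\<in>{..<m}. g1 i \<le> z} \<le> card {i\<in>{..<m}. g1 i \<le> c}"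
        using False by (intro card_mono) auto
      have c2: "card {i\<in>{..<m}. g2 i \<le> z} \<le> card {i\<in>{..<m}. g1 i \<le> c}"
        unfolding sameset[OF order_refl] using False by (intro card_mono) auto
      have "real (card {i\<in>{..<m}. g1 i \<le> z}) / real m < u"
        using c1 cnt u mp by (simp add: divide_less_eq) (smt (verit) mult_right_mono of_nat_le_iff of_nat_0_le_iff)
      moreover have "real (card {i\<in>{..<m}. g2 i \<le> z}) / real m < u"
        using c2 cnt u mp by (simp add: divide_less_eq) (smt (verit) mult_right_mono of_nat_le_iff of_nat_0_le_iff)
      ultimately show ?thesis unfolding emp_law_basic(3)[OF m] by auto
    qed
  qed
  then show ?thesis unfolding quantile_def by simp
qed

lemma rho_emp_eq:
  fixes g1 g2 :: "nat \<Rightarrow> real"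
  assumes trm: "tail_risk_measure \<beta> \<rho>" and m: "m > 0"
    and diff: "\<And>i. i < m \<Longrightarrow> g1 i \<noteq> g2 i \<Longrightarrow> g1 i \<le> c \<and> g2 i \<le> c"
    and cnt: "real (card {i\<in>{..<m}. g1 i \<le> c}) < \<beta> * real m"
  shows "\<rho> (emp_law g1 m) = \<rho> (emp_law g2 m)"
  using trm unfolding tail_risk_measure_def
  by (elim allE impE) (auto simp: emp_law_basic[OF m] intro!: quantile_emp_eq[OF m diff cnt])


locale setting = prob_space M for M :: "'w measure" +
  fixes Y :: "'w \<Rightarrow> 'a::euclidean_space" and X :: "'a set" and \<beta> :: real and R :: "'a set"
    and x1 x2 :: 'a and Ys :: "nat \<Rightarrow> 'w \<Rightarrow> 'a"
  assumes Ym[measurable]: "Y \<in> borel_measurable M"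
    and b: "0 < \<beta>" "\<beta> < 1"
    and supp: "support_of (distr M borel Y) = UNIV"
    and x12: "x1 \<in> X" "x2 \<in> X" "x1 \<noteq> x2" "independent {x1, x2}"
    and RR: "riskregion M Y \<beta> X \<subseteq> R" and Rb[measurable]: "R \<in> sets borel"
    and intY: "integrable M Y"
    and pc0: "0 < measure M {w\<in>space M. Y w \<notin> R}" and pc1: "measure M {w\<in>space M. Y w \<notin> R} < 1"
    and indep: "indep_vars (\<lambda>_. borel) Ys UNIV"
    and dist: "\<And>i. distr M borel (Ys i) = distr M borel Y"
    and cX: "compact X"
begin

definition "S = {w\<in>space M. Y w \<notin> R}"
definition "pc = measure M S"
definition "V = set_lebesgue_integral M S Y"
definition "E = (1 / pc) *\<^sub>R V"

lemma S_sets[measurable]: "S \<in> sets M" unfolding S_def by measurable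

lemma pc_pos: "pc > 0" using pc0 unfolding pc_def S_def .

lemma psi_eq: "psi M Y R y = (if y \<in> R then y else E)"
  unfolding psi_def E_def V_def pc_def S_def by simp

lemma VaR_ex: "\<exists>q. VaR M Y \<beta> x = ereal q \<and> prob {w\<in>space M. loss x (Y w) \<le> q} \<ge> \<beta>
      \<and> (\<forall>z<q. prob {w\<in>space M. loss x (Y w) \<le> z} < \<beta>)"
  by (rule VaR_props[OF prob_space_axioms Ym b])

lemma in_R:
  assumes "x \<in> X" "VaR M Y \<beta> x = ereal q" "q \<le> loss x y" shows "y \<in> R"
proof -
  have "y \<in> riskregion_x M Y \<beta> x" unfolding riskregion_x_def using assms(2,3) by simp
  then have "y \<in> riskregion M Y \<beta> X" unfolding riskregion_def using assms(1) by blast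
  then show ?thesis using RR by blast
qed

lemma loss_E_less:
  assumes x0: "x0 \<in> X" and q: "VaR M Y \<beta> x0 = ereal q"
  shows "loss x0 E < q"
proof -
  have out: "loss x0 (Y w) < q" if "w \<in> S" for w
    using in_R[OF x0 q, of "Y w"] that unfolding S_def by force
  define f where "f w = (q - loss x0 (Y w)) * indicator S w" for w
  have intl: "integrable M (\<lambda>w. loss x0 (Y w))"
    unfolding loss_def using intY by (intro Bochner_Integration.integrable_minus integrable_inner_right)
  have fint: "integrable M f" unfolding f_def
    by (intro integrable_real_mult_indicator S_sets Bochner_Integration.integrable_diff intl) simp
  have fnn: "AE w in M. 0 \<le> f w" unfolding f_def using out by (auto simp: indicator_def less_imp_le)
  have "integral\<^sup>L M f \<noteq> 0"
  proof
    assume "integral\<^sup>L M f = 0"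
    then have "AE w in M. f w = 0" using integral_nonneg_eq_0_iff_AE[OF fint fnn] by simp
    then have "AE w in M. w \<notin> S" by (rule AE_mp) (auto intro!: AE_I2 dest: out simp: f_def)
    then have "emeasure M S = 0" using AE_iff_measurable[OF S_sets, of "\<lambda>w. w \<notin> S"] S_def by auto
    then show False using pc_pos unfolding pc_def by (simp add: emeasure_eq_measure)
  qed
  moreover have "integral\<^sup>L M f \<ge> 0" using fnn by (rule integral_nonneg_AE)
  ultimately have fpos: "integral\<^sup>L M f > 0" by simp
  have IS: "integrable M (\<lambda>w. indicator S w *\<^sub>R Y w)"
    by (intro integrable_mult_indicator S_sets intY)
  have "integral\<^sup>L M f = q * pc - integral\<^sup>L M (\<lambda>w. loss x0 (Y w) * indicator S w)"
  proof -
    have "integral\<^sup>L M f = integral\<^sup>L M (\<lambda>w. q * indicator S w - loss x0 (Y w) * indicator S w)"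
      unfolding f_def by (intro Bochner_Integration.integral_cong) (auto simp: algebra_simps)
    also have "\<dots> = q * pc - integral\<^sup>L M (\<lambda>w. loss x0 (Y w) * indicator S w)"
      by (subst Bochner_Integration.integral_diff) (auto intro!: integrable_real_mult_indicator intl integrable_real_indicator simp: pc_def less_top[symmetric])
    finally show ?thesis .
  qed
  moreover have "integral\<^sup>L M (\<lambda>w. loss x0 (Y w) * indicator S w) = - (x0 \<bullet> V)"
  proof -
    have "x0 \<bullet> V = integral\<^sup>L M (\<lambda>w. x0 \<bullet> (indicator S w *\<^sub>R Y w))"
      unfolding V_def set_lebesgue_integral_def using integral_inner_right[of x0 M "\<lambda>w. indicator S w *\<^sub>R Y w"] IS by simp
    also have "\<dots> = integral\<^sup>L M (\<lambda>w. - (loss x0 (Y w) * indicator S w))"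
      unfolding loss_def by (intro Bochner_Integration.integral_cong) (auto simp: indicator_def)
    finally show ?thesis by simp
  qed
  ultimately have "x0 \<bullet> V > - q * pc" using fpos by simp
  moreover have "loss x0 E = - (x0 \<bullet> V) / pc" unfolding loss_def E_def by simp
  moreover have "- (x0 \<bullet> V) / pc < q"
    using \<open>x0 \<bullet> V > - q * pc\<close> by (subst pos_divide_less_eq[OF pc_pos]) linarith
  ultimately show ?thesis by simp
qed


lemma x_nonzero: "x0 \<in> X \<Longrightarrow> x0 \<noteq> 0"
proof
  assume x0: "x0 \<in> X" and z: "x0 = 0"
  have V0: "VaR M Y \<beta> 0 = ereal 0" by (rule VaR_zero[OF prob_space_axioms Ym b])
  have "y \<in> R" for y using in_R[OF x0[unfolded z] V0] by simp
  then have "S = {}" unfolding S_def by auto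
  then show False using pc_pos unfolding pc_def by simp
qed

lemma P1:
  assumes x0: "x0 \<in> X"
  shows "prob {w\<in>space M. Y w \<in> R \<and> loss x0 E < loss x0 (Y w)} > 1 - \<beta>"
proof -
  obtain q where q: "VaR M Y \<beta> x0 = ereal q" "\<forall>z<q. prob {w\<in>space M. loss x0 (Y w) \<le> z} < \<beta>"
    using VaR_ex[of x0] by blast
  have zl: "loss x0 E < q" by (rule loss_E_less[OF x0 q(1)])
  define A1 where "A1 = {w\<in>space M. q \<le> loss x0 (Y w)}"
  define A2 where "A2 = {w\<in>space M. Y w \<in> R \<and> loss x0 E < loss x0 (Y w) \<and> loss x0 (Y w) < q}"
  have [measurable]: "A1 \<in> sets M" "A2 \<in> sets M" unfolding A1_def A2_def by measurable
  have p2: "prob A2 > 0" unfolding A2_def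
    by (rule agg_core[OF prob_space_axioms Ym b supp x12 RR Rb x0 x_nonzero[OF x0] q(1) zl])
  define L where "L n = {w\<in>space M. loss x0 (Y w) \<le> q - 1 / real (Suc n)}" for n
  have [measurable]: "L n \<in> sets M" for n unfolding L_def by measurable
  have incL: "incseq L"
  proof (rule incseq_SucI)
    fix n
    have "1 / real (Suc (Suc n)) \<le> 1 / real (Suc n)" by (simp add: frac_le)
    then show "L n \<subseteq> L (Suc n)" unfolding L_def by auto
  qed
  have UL: "(\<Union>n. L n) = {w\<in>space M. loss x0 (Y w) < q}"
  proof (intro set_eqI iffI)
    fix w assume "w \<in> (\<Union>n. L n)"
    then obtain n where "w \<in> L n" by blast
    then have w: "w \<in> space M" "loss x0 (Y w) \<le> q - 1 / real (Suc n)" unfolding L_def by auto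
    have "1 / real (Suc n) > 0" by simp
    then have "w \<in> space M" "loss x0 (Y w) < q" using w by linarith+
    then show "w \<in> {w\<in>space M. loss x0 (Y w) < q}" by simp
  next
    fix w assume w: "w \<in> {w\<in>space M. loss x0 (Y w) < q}"
    then have "q - loss x0 (Y w) > 0" by simp
    then obtain n where "1 / real (Suc n) < q - loss x0 (Y w)" using reals_Archimedean by (metis inverse_eq_divide of_nat_Suc)
    then show "w \<in> (\<Union>n. L n)" using w unfolding L_def by (auto intro!: exI[of _ n])
  qed
  have "(\<lambda>n. prob (L n)) \<longlonglongrightarrow> prob (\<Union>n. L n)"
    by (rule finite_Lim_measure_incseq) (auto simp: incL)
  moreover have "prob (L n) \<le> \<beta>" for n
  proof -
    have "q - 1 / real (Suc n) < q" by simp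
    then show ?thesis using q(2) unfolding L_def by (auto intro: less_imp_le)
  qed
  ultimately have "prob (\<Union>n. L n) \<le> \<beta>" by (intro LIMSEQ_le_const2) auto
  then have plt: "prob {w\<in>space M. loss x0 (Y w) < q} \<le> \<beta>" unfolding UL .
  have "A1 = space M - {w\<in>space M. loss x0 (Y w) < q}" unfolding A1_def by auto
  then have "prob A1 = 1 - prob {w\<in>space M. loss x0 (Y w) < q}" by (simp add: prob_compl)
  then have p1: "prob A1 \<ge> 1 - \<beta>" using plt by simp
  have disj: "A1 \<inter> A2 = {}" unfolding A1_def A2_def by auto
  have "prob (A1 \<union> A2) = prob A1 + prob A2" by (rule finite_measure_Union) (auto simp: disj)
  moreover have "prob (A1 \<union> A2) \<le> prob {w\<in>space M. Y w \<in> R \<and> loss x0 E < loss x0 (Y w)}"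
  proof (rule finite_measure_mono)
    show "A1 \<union> A2 \<subseteq> {w\<in>space M. Y w \<in> R \<and> loss x0 E < loss x0 (Y w)}"
      using in_R[OF x0 q(1)] zl unfolding A1_def A2_def by auto
  qed measurable
  ultimately show ?thesis using p1 p2 by linarith
qed


lemma Ysm[measurable]: "Ys i \<in> borel_measurable M"
  using indep unfolding indep_vars_def by auto

lemma slln_fun:
  fixes h :: "'a \<Rightarrow> real"
  assumes hm[measurable]: "h \<in> borel_measurable borel" and hi: "integrable M (\<lambda>w. h (Y w))"
  shows "AE w in M. (\<lambda>m. (\<Sum>i<m. h (Ys i w)) / real m) \<longlonglongrightarrow> expectation (\<lambda>w. h (Y w))"
proof (rule slln[OF prob_space_axioms _ _ _ hi])
  show "indep_vars (\<lambda>_. borel) (\<lambda>i w. h (Ys i w)) UNIV"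
    by (rule indep_vars_compose2[OF indep]) measurable
  show "(\<lambda>w. h (Y w)) \<in> borel_measurable M" by measurable
  fix i
  have "distr M borel (\<lambda>w. h (Ys i w)) = distr (distr M borel (Ys i)) borel h"
    by (subst distr_distr) (auto simp: comp_def)
  also have "\<dots> = distr (distr M borel Y) borel h" by (simp only: dist)
  also have "\<dots> = distr M borel (\<lambda>w. h (Y w))"
    by (subst distr_distr) (auto simp: comp_def)
  finally show "distr M borel (\<lambda>w. h (Ys i w)) = distr M borel (\<lambda>w. h (Y w))" .
qed

definition A :: "'a \<Rightarrow> real \<Rightarrow> real \<Rightarrow> 'a set" where
  "A x0 \<eta> K = {y. y \<in> R \<and> loss x0 E + 2 * \<eta> < loss x0 y \<and> norm y < K}"

lemma A_sets[measurable]: "A x0 \<eta> K \<in> sets borel"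
  unfolding A_def by measurable

lemma eta_K:
  assumes x0: "x0 \<in> X"
  shows "\<exists>\<eta> K. \<eta> > 0 \<and> prob {w\<in>space M. Y w \<in> A x0 \<eta> K} > 1 - \<beta>"
proof -
  define B where "B n = {w\<in>space M. Y w \<in> A x0 (1 / (2 * real (Suc n))) (real n)}" for n
  have [measurable]: "B n \<in> sets M" for n unfolding B_def by measurable
  have Bn: "B n = {w\<in>space M. Y w \<in> R \<and> loss x0 E + 1 / real (Suc n) < loss x0 (Y w) \<and> norm (Y w) < real n}" for n
  proof -
    have "2 * (1 / (2 * real (Suc n))) = 1 / real (Suc n)" by (simp del: of_nat_Suc)
    then show ?thesis unfolding B_def A_def by (simp del: of_nat_Suc)
  qed
  have incB: "incseq B"
  proof (rule incseq_SucI)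
    fix n
    have "1 / real (Suc (Suc n)) \<le> 1 / real (Suc n)" by (simp add: frac_le)
    then show "B n \<subseteq> B (Suc n)" unfolding Bn by auto
  qed
  have UB: "(\<Union>n. B n) = {w\<in>space M. Y w \<in> R \<and> loss x0 E < loss x0 (Y w)}"
  proof (intro set_eqI iffI)
    fix w assume "w \<in> (\<Union>n. B n)"
    then obtain n where w: "w \<in> B n" by blast
    have w': "w \<in> space M" "Y w \<in> R" "loss x0 E + 1 / real (Suc n) < loss x0 (Y w)"
      using w unfolding Bn by auto
    have "0 < 1 / real (Suc n)" by simp
    then have "loss x0 E < loss x0 (Y w)" using w'(3) by linarith
    then show "w \<in> {w\<in>space M. Y w \<in> R \<and> loss x0 E < loss x0 (Y w)}"
      using w' by simp
  next
    fix w assume w: "w \<in> {w\<in>space M. Y w \<in> R \<and> loss x0 E < loss x0 (Y w)}"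
    then have "loss x0 (Y w) - loss x0 E > 0" by simp
    then obtain n1 where n1: "1 / real (Suc n1) < loss x0 (Y w) - loss x0 E"
      using reals_Archimedean by (metis inverse_eq_divide of_nat_Suc)
    obtain n2 where n2: "norm (Y w) < real n2" using reals_Archimedean2 by blast
    define n where "n = max n1 n2"
    have "1 / real (Suc n) \<le> 1 / real (Suc n1)" unfolding n_def by (simp add: frac_le)
    moreover have "real n2 \<le> real n" unfolding n_def by simp
    ultimately show "w \<in> (\<Union>n. B n)" using w n1 n2 unfolding Bn
      by (intro UN_I[of n]) auto
  qed
  have "(\<lambda>n. prob (B n)) \<longlonglongrightarrow> prob (\<Union>n. B n)"
    by (rule finite_Lim_measure_incseq) (auto simp: incB)
  then have "\<forall>\<^sub>F n in sequentially. prob (B n) > 1 - \<beta>"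
    using P1[OF x0] unfolding UB by (rule order_tendstoD)
  then obtain n where "prob (B n) > 1 - \<beta>" by (auto simp: eventually_sequentially)
  then show ?thesis unfolding B_def by (intro exI[of _ "1 / (2 * real (Suc n))"] exI[of _ "real n"]) auto
qed

lemma near:
  assumes y: "y \<in> A x0 \<eta> K" and eta: "\<eta> > 0"
    and d: "norm (x - x0) < \<eta> / (\<bar>K\<bar> + norm E + 1)"
  shows "loss x E + \<eta> < loss x y"
proof -
  have y1: "loss x0 E + 2 * \<eta> < loss x0 y" "norm y < K" using y unfolding A_def by auto
  have "norm (y - E) \<le> norm y + norm E" by (rule norm_triangle_ineq4)
  then have nyE: "norm (y - E) \<le> \<bar>K\<bar> + norm E + 1" using y1(2) by linarith
  have pos: "\<bar>K\<bar> + norm E + 1 > 0" by (simp add: add_nonneg_pos)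
  have "\<bar>(x - x0) \<bullet> (y - E)\<bar> \<le> norm (x - x0) * norm (y - E)" by (rule Cauchy_Schwarz_ineq2)
  also have "\<dots> \<le> norm (x - x0) * (\<bar>K\<bar> + norm E + 1)" by (intro mult_left_mono nyE) simp
  also have "\<dots> < \<eta> / (\<bar>K\<bar> + norm E + 1) * (\<bar>K\<bar> + norm E + 1)" by (intro mult_strict_right_mono d pos)
  also have "\<dots> = \<eta>" using pos by simp
  finally have cs: "\<bar>(x - x0) \<bullet> (y - E)\<bar> < \<eta>" .
  have "loss x y - loss x E = (loss x0 y - loss x0 E) - (x - x0) \<bullet> (y - E)"
    unfolding loss_def by (simp add: inner_diff_left inner_diff_right)
  then show ?thesis using cs y1(1) by linarith
qed

end

lemma card_filter_Suc_le:
  "card {i\<in>{..<Suc k}. P i} \<le> card {i\<in>{..<k}. P i} + 1"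
proof -
  have "{i\<in>{..<Suc k}. P i} \<subseteq> insert k {i\<in>{..<k}. P i}" by auto
  then have "card {i\<in>{..<Suc k}. P i} \<le> card (insert k {i\<in>{..<k}. P i})" by (intro card_mono) auto
  also have "\<dots> \<le> card {i\<in>{..<k}. P i} + 1" by (simp add: card_insert_if)
  finally show ?thesis .
qed

lemma card_filter_le: "card {i\<in>{..<m}. P i} \<le> m"
  using card_mono[of "{..<m}" "{i\<in>{..<m}. P i}"] by auto

lemma card_filter_split: "card {i\<in>{..<m}. P i} + card {i\<in>{..<m}. \<not> P i} = m"
proof -
  have "card ({i\<in>{..<m}. P i} \<union> {i\<in>{..<m}. \<not> P i}) = card {i\<in>{..<m}. P i} + card {i\<in>{..<m}. \<not> P i}"
    by (rule card_Un_disjoint) auto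
  moreover have "{i\<in>{..<m}. P i} \<union> {i\<in>{..<m}. \<not> P i} = {..<m}" by auto
  ultimately show ?thesis by simp
qed

lemma sum_indicator_card: fixes m :: nat shows "(\<Sum>i<m. indicator A (Z i) :: real) = real (card {i\<in>{..<m}. Z i \<in> A})"
proof (induction m)
  case 0 then show ?case by simp
next
  case (Suc m)
  have e: "{i\<in>{..<Suc m}. Z i \<in> A} = (if Z m \<in> A then insert m {i\<in>{..<m}. Z i \<in> A} else {i\<in>{..<m}. Z i \<in> A})"
    by (auto simp: less_Suc_eq)
  have "m \<notin> {i\<in>{..<m}. Z i \<in> A}" by simp
  then show ?case using Suc.IH unfolding e by (simp add: indicator_def)
qed

lemma count_hits:
  fixes c :: "nat \<Rightarrow> nat"
  assumes c0: "c 0 = 0" and cs: "\<And>k. c (Suc k) \<le> c k + 1" and unb: "\<And>n. \<exists>m. n \<le> c m"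
  shows "\<exists>m. c m = n"
proof -
  define m0 where "m0 = (LEAST m. n \<le> c m)"
  have m0: "n \<le> c m0" unfolding m0_def using unb by (rule LeastI_ex)
  show ?thesis
  proof (cases m0)
    case 0 then show ?thesis using m0 c0 by auto
  next
    case (Suc k)
    have "\<not> n \<le> c k" using Suc unfolding m0_def by (metis Suc_n_not_le_n Least_le)
    then have "c m0 = n" using cs[of k] m0 Suc by simp
    then show ?thesis by blast
  qed
qed

lemma Nsamp_facts:
  fixes Z :: "nat \<Rightarrow> 'a"
  assumes unb: "\<And>n. \<exists>m. n \<le> card {i\<in>{..<m}. Z i \<in> R}"
  defines "N \<equiv> (\<lambda>n. (LEAST m. card {i\<in>{..<m}. Z i \<in> R} = n))"
  shows "card {i\<in>{..<N n}. Z i \<in> R} = n" "n \<le> N n"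
    "card {i\<in>{..<N n}. Z i \<notin> R} = N n - n"
proof -
  have "\<exists>m. card {i\<in>{..<m}. Z i \<in> R} = n"
  proof (rule count_hits[where c="\<lambda>m. card {i\<in>{..<m}. Z i \<in> R}"])
    show "\<And>k. card {i\<in>{..<Suc k}. Z i \<in> R} \<le> card {i\<in>{..<k}. Z i \<in> R} + 1" by (rule card_filter_Suc_le)
    show "\<And>n. \<exists>m. n \<le> card {i\<in>{..<m}. Z i \<in> R}" by (rule unb)
  qed simp
  then show 1: "card {i\<in>{..<N n}. Z i \<in> R} = n" unfolding N_def by (rule LeastI_ex)
  show "n \<le> N n" using card_filter_le[of "N n" "\<lambda>i. Z i \<in> R"] 1 by simp
  show "card {i\<in>{..<N n}. Z i \<notin> R} = N n - n" using card_filter_split[of "N n" "\<lambda>i. Z i \<in> R"] 1 by simp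
qed


lemma ratio_lim:
  fixes a c :: "nat \<Rightarrow> real"
  assumes "(\<lambda>m. a m / real m) \<longlonglongrightarrow> \<alpha>" "(\<lambda>m. c m / real m) \<longlonglongrightarrow> \<gamma>" "\<gamma> \<noteq> 0"
  shows "(\<lambda>m. a m / c m) \<longlonglongrightarrow> \<alpha> / \<gamma>"
proof -
  have "(\<lambda>m. (a m / real m) / (c m / real m)) \<longlonglongrightarrow> \<alpha> / \<gamma>"
    by (rule tendsto_divide[OF assms])
  moreover have "\<forall>\<^sub>F m in sequentially. (a m / real m) / (c m / real m) = a m / c m"
    by (rule eventually_sequentiallyI[of 1]) simp
  ultimately show ?thesis by (rule Lim_transform_eventually)
qed

context setting
begin

lemma count_lim:
  assumes H1: "(\<lambda>m. (\<Sum>i<m. indicator (-R) (Ys i w)) / real m) \<longlonglongrightarrow> pc"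
  shows "filterlim (\<lambda>m. real (card {i\<in>{..<m}. Ys i w \<in> R})) at_top sequentially"
proof -
  have cnt: "(\<Sum>i<m. indicator (-R) (Ys i w) :: real) = real m - real (card {i\<in>{..<m}. Ys i w \<in> R})" for m
  proof -
    have "(\<Sum>i<m. indicator (-R) (Ys i w) :: real) = real (card {i\<in>{..<m}. Ys i w \<in> -R})"
      by (rule sum_indicator_card)
    also have "{i\<in>{..<m}. Ys i w \<in> -R} = {i\<in>{..<m}. Ys i w \<notin> R}" by auto
    finally show ?thesis using card_filter_split[of m "\<lambda>i. Ys i w \<in> R"] by simp
  qed
  have "(\<lambda>m. 1 - (\<Sum>i<m. indicator (-R) (Ys i w)) / real m) \<longlonglongrightarrow> 1 - pc"
    by (intro tendsto_intros H1)
  moreover have "\<forall>\<^sub>F m in sequentially. 1 - (\<Sum>i<m. indicator (-R) (Ys i w)) / real m = real (card {i\<in>{..<m}. Ys i w \<in> R}) / real m"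
    by (rule eventually_sequentiallyI[of 1]) (simp add: cnt field_simps)
  ultimately have L: "(\<lambda>m. real (card {i\<in>{..<m}. Ys i w \<in> R}) / real m) \<longlonglongrightarrow> 1 - pc"
    by (rule Lim_transform_eventually)
  have "1 - pc > 0" using pc1 unfolding pc_def S_def by simp
  then have "filterlim (\<lambda>m. real (card {i\<in>{..<m}. Ys i w \<in> R}) / real m * real m) at_top sequentially"
    by (intro filterlim_tendsto_pos_mult_at_top[OF L] filterlim_real_sequentially)
  moreover have "\<forall>\<^sub>F m in sequentially. real (card {i\<in>{..<m}. Ys i w \<in> R}) / real m * real m \<le> real (card {i\<in>{..<m}. Ys i w \<in> R})"
    by (rule eventually_sequentiallyI[of 1]) simp
  ultimately show ?thesis by (rule filterlim_at_top_mono)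
qed

lemma N_facts:
  assumes H1: "(\<lambda>m. (\<Sum>i<m. indicator (-R) (Ys i w)) / real m) \<longlonglongrightarrow> pc"
  shows "card {i\<in>{..<Nsamp R Ys w n}. Ys i w \<in> R} = n" "n \<le> Nsamp R Ys w n"
    "card {i\<in>{..<Nsamp R Ys w n}. Ys i w \<notin> R} = Nsamp R Ys w n - n"
    "filterlim (Nsamp R Ys w) at_top sequentially"
proof -
  have unb: "\<exists>m. n \<le> card {i\<in>{..<m}. Ys i w \<in> R}" for n
  proof -
    have "\<forall>\<^sub>F m in sequentially. real n \<le> real (card {i\<in>{..<m}. Ys i w \<in> R})"
      using count_lim[OF H1] unfolding filterlim_at_top by (rule allE)
    then obtain m where "real n \<le> real (card {i\<in>{..<m}. Ys i w \<in> R})" by (auto simp: eventually_sequentially)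
    then show ?thesis by auto
  qed
  note F = Nsamp_facts[where Z="\<lambda>i. Ys i w" and R=R, OF unb, folded Nsamp_def]
  show "card {i\<in>{..<Nsamp R Ys w n}. Ys i w \<in> R} = n" "n \<le> Nsamp R Ys w n"
    "card {i\<in>{..<Nsamp R Ys w n}. Ys i w \<notin> R} = Nsamp R Ys w n - n"
    using F[of n] by (auto simp: Nsamp_def)
  show "filterlim (Nsamp R Ys w) at_top sequentially"
    by (rule filterlim_at_top_mono[OF filterlim_ident]) (use F in \<open>auto simp: Nsamp_def\<close>)
qed


lemma ybar_lim:
  assumes H1: "(\<lambda>m. (\<Sum>i<m. indicator (-R) (Ys i w)) / real m) \<longlonglongrightarrow> pc"
    and H2: "\<forall>b\<in>Basis. (\<lambda>m. (\<Sum>i<m. indicator (-R) (Ys i w) * (Ys i w \<bullet> b)) / real m) \<longlonglongrightarrow> V \<bullet> b"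
  shows "(\<lambda>n. norm (ybar R Ys w n - E)) \<longlonglongrightarrow> 0"
proof -
  note NF = N_facts[OF H1]
  have comp: "(\<lambda>n. ybar R Ys w n \<bullet> b) \<longlonglongrightarrow> E \<bullet> b" if b: "b \<in> Basis" for b
  proof -
    define a where "a m = (\<Sum>i<m. indicator (-R) (Ys i w) * (Ys i w \<bullet> b))" for m
    define c where "c m = (\<Sum>i<m. indicator (-R) (Ys i w) :: real)" for m
    have "(\<lambda>m. a m / c m) \<longlonglongrightarrow> (V \<bullet> b) / pc"
      unfolding a_def c_def using H2 b H1 pc_pos by (intro ratio_lim) auto
    then have L: "(\<lambda>n. a (Nsamp R Ys w n) / c (Nsamp R Ys w n)) \<longlonglongrightarrow> (V \<bullet> b) / pc"
      by (rule filterlim_compose[OF _ NF(4)])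
    have eq: "ybar R Ys w n \<bullet> b = a (Nsamp R Ys w n) / c (Nsamp R Ys w n)" for n
    proof -
      define N where "N = Nsamp R Ys w n"
      have "a N = (\<Sum>i\<in>{i\<in>{..<N}. Ys i w \<notin> R}. Ys i w \<bullet> b)"
      proof -
        have "(\<Sum>i\<in>{i\<in>{..<N}. Ys i w \<notin> R}. Ys i w \<bullet> b) = (\<Sum>i<N. if Ys i w \<notin> R then Ys i w \<bullet> b else 0)"
          by (rule sum.inter_filter) simp
        also have "\<dots> = a N" unfolding a_def by (rule sum.cong) (auto simp: indicator_def)
        finally show ?thesis by simp
      qed
      moreover have "c N = real (N - n)"
      proof -
        have "c N = real (card {i\<in>{..<N}. Ys i w \<in> -R})" unfolding c_def by (rule sum_indicator_card)
        also have "{i\<in>{..<N}. Ys i w \<in> -R} = {i\<in>{..<N}. Ys i w \<notin> R}" by auto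
        finally show ?thesis using NF(3)[of n] unfolding N_def by simp
      qed
      ultimately show ?thesis unfolding ybar_def N_def[symmetric]
        by (simp add: inner_sum_left)
    qed
    have "E \<bullet> b = (V \<bullet> b) / pc" unfolding E_def by simp
    then show ?thesis unfolding eq using L by simp
  qed
  have "(\<lambda>n. \<Sum>b\<in>Basis. \<bar>ybar R Ys w n \<bullet> b - E \<bullet> b\<bar>) \<longlonglongrightarrow> (\<Sum>b\<in>(Basis::'a set). \<bar>E \<bullet> b - E \<bullet> b\<bar>)"
    by (intro tendsto_intros comp)
  then have S0: "(\<lambda>n. \<Sum>b\<in>Basis. \<bar>(ybar R Ys w n - E) \<bullet> b\<bar>) \<longlonglongrightarrow> 0"
    by (simp add: inner_diff_left)
  show ?thesis
  proof (rule tendsto_sandwich[OF _ _ tendsto_const S0])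
    show "\<forall>\<^sub>F n in sequentially. 0 \<le> norm (ybar R Ys w n - E)" by simp
    show "\<forall>\<^sub>F n in sequentially. norm (ybar R Ys w n - E) \<le> (\<Sum>b\<in>Basis. \<bar>(ybar R Ys w n - E) \<bullet> b\<bar>)"
      by (intro always_eventually allI norm_le_l1)
  qed
qed


lemma det_main:
  fixes F :: "'a set" and \<eta> K p :: "'a \<Rightarrow> real" and B :: real
  assumes H1: "(\<lambda>m. (\<Sum>i<m. indicator (-R) (Ys i w)) / real m) \<longlonglongrightarrow> pc"
    and H2: "\<forall>b\<in>Basis. (\<lambda>m. (\<Sum>i<m. indicator (-R) (Ys i w) * (Ys i w \<bullet> b)) / real m) \<longlonglongrightarrow> V \<bullet> b"
    and H3: "\<forall>x0\<in>F. (\<lambda>m. (\<Sum>i<m. indicator (A x0 (\<eta> x0) (K x0)) (Ys i w)) / real m) \<longlonglongrightarrow> p x0"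
    and p: "\<forall>x0\<in>F. p x0 > 1 - \<beta>"
    and Ff: "finite F" and eta: "\<forall>x0\<in>F. \<eta> x0 > 0"
    and cover: "X \<subseteq> (\<Union>x0\<in>F. ball x0 (\<eta> x0 / (\<bar>K x0\<bar> + norm E + 1)))"
    and B: "\<forall>x\<in>X. norm x \<le> B" "B \<ge> 0"
    and trm: "tail_risk_measure \<beta> \<rho>"
  shows "\<forall>\<^sub>F n in sequentially. Nsamp R Ys w n > n \<and>
            (\<forall>x\<in>X. rho_hat \<rho> R Ys w n x = rho_tilde \<rho> M Y R Ys w (Nsamp R Ys w n) x)"
proof -
  note NF = N_facts[OF H1]
  define N where "N = Nsamp R Ys w"
  have Fne: "F \<noteq> {}" using cover x12(1) by auto
  define \<eta>m where "\<eta>m = Min (\<eta> ` F)"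
  have \<eta>m_pos: "\<eta>m > 0" unfolding \<eta>m_def using Ff Fne eta by (subst Min_gr_iff) auto
  have \<eta>m_le: "\<eta>m \<le> \<eta> x0" if "x0 \<in> F" for x0 unfolding \<eta>m_def using Ff that by (intro Min_le) auto
  have ev1: "\<forall>\<^sub>F n in sequentially. norm (ybar R Ys w n - E) < \<eta>m / (B + 1)"
    using ybar_lim[OF H1 H2] \<eta>m_pos B(2) by (intro order_tendstoD) auto
  have "\<forall>\<^sub>F m in sequentially. \<forall>x0\<in>F. (\<Sum>i<m. indicator (A x0 (\<eta> x0) (K x0)) (Ys i w)) / real m > 1 - \<beta>"
    using Ff H3 p by (intro eventually_ball_finite ballI) (auto intro: order_tendstoD)
  then have ev2: "\<forall>\<^sub>F n in sequentially. \<forall>x0\<in>F. (\<Sum>i<N n. indicator (A x0 (\<eta> x0) (K x0)) (Ys i w)) / real (N n) > 1 - \<beta>"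
    unfolding N_def by (rule eventually_compose_filterlim[OF _ NF(4)])
  have "\<forall>\<^sub>F m in sequentially. (\<Sum>i<m. indicator (-R) (Ys i w)) / real m > 0"
    using H1 pc_pos by (intro order_tendstoD)
  then have ev3: "\<forall>\<^sub>F n in sequentially. (\<Sum>i<N n. indicator (-R) (Ys i w)) / real (N n) > 0"
    unfolding N_def by (rule eventually_compose_filterlim[OF _ NF(4)])
  show ?thesis
    using ev1 ev2 ev3
  proof (eventually_elim)
    case (elim n)
    define m where "m = N n"
    have "(\<Sum>i<m. indicator (-R) (Ys i w) :: real) \<noteq> 0" using elim(3) unfolding m_def by auto
    moreover have "(\<Sum>i<m. indicator (-R) (Ys i w) :: real) = real (card {i\<in>{..<m}. Ys i w \<notin> R})"
    proof -
      have "(\<Sum>i<m. indicator (-R) (Ys i w) :: real) = real (card {i\<in>{..<m}. Ys i w \<in> -R})" by (rule sum_indicator_card)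
      also have "{i\<in>{..<m}. Ys i w \<in> -R} = {i\<in>{..<m}. Ys i w \<notin> R}" by auto
      finally show ?thesis .
    qed
    ultimately have c0: "card {i\<in>{..<m}. Ys i w \<notin> R} \<noteq> 0" by (simp only: of_nat_eq_0_iff) simp
    have "card {i\<in>{..<m}. Ys i w \<notin> R} = m - n" using NF(3)[of n] unfolding m_def N_def .
    then have "m - n \<noteq> 0" using c0 by simp
    then have mn: "m > n" by linarith
    then have mpos: "m > 0" by simp
    have rm: "real m > 0" using mpos by simp
    show ?case
    proof (intro conjI ballI)
      show "n < Nsamp R Ys w n" using mn unfolding m_def N_def .
      fix x assume x: "x \<in> X"
      obtain x0 where x0: "x0 \<in> F" "x \<in> ball x0 (\<eta> x0 / (\<bar>K x0\<bar> + norm E + 1))" using cover x by blast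
      have dx: "norm (x - x0) < \<eta> x0 / (\<bar>K x0\<bar> + norm E + 1)"
        using x0(2) by (simp add: dist_norm norm_minus_commute)
      define c where "c = max (loss x (ybar R Ys w n)) (loss x E)"
      have "loss x (ybar R Ys w n) - loss x E = - (x \<bullet> (ybar R Ys w n - E))"
        unfolding loss_def by (simp add: inner_diff_right)
      also have "\<dots> \<le> norm x * norm (ybar R Ys w n - E)"
        using Cauchy_Schwarz_ineq2[of x "ybar R Ys w n - E"] by linarith
      also have "\<dots> \<le> B * norm (ybar R Ys w n - E)" using B x by (intro mult_right_mono) auto
      also have "\<dots> \<le> B * (\<eta>m / (B + 1))" using elim(1) B(2) by (intro mult_left_mono) auto
      also have "\<dots> < \<eta>m"
      proof -
        have "B * (\<eta>m / (B + 1)) = \<eta>m * (B / (B + 1))" by simp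
        also have "\<dots> < \<eta>m * 1" using B(2) \<eta>m_pos by (intro mult_strict_left_mono) auto
        finally show ?thesis by simp
      qed
      finally have c_lt: "c < loss x E + \<eta> x0" unfolding c_def using \<eta>m_le[OF x0(1)] eta x0(1) by auto
      define g1 where "g1 i = (if Ys i w \<in> R then loss x (Ys i w) else loss x (ybar R Ys w n))" for i
      define g2 where "g2 i = loss x (psi M Y R (Ys i w))" for i
      have g2_eq: "g2 i = (if Ys i w \<in> R then loss x (Ys i w) else loss x E)" for i
        unfolding g2_def psi_eq by simp
      have diff: "g1 i \<le> c \<and> g2 i \<le> c" if "i < m" "g1 i \<noteq> g2 i" for i
        using that unfolding g2_eq g1_def c_def by (auto split: if_splits)
      have sub: "{i\<in>{..<m}. Ys i w \<in> A x0 (\<eta> x0) (K x0)} \<subseteq> {i\<in>{..<m}. \<not> g1 i \<le> c}"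
      proof
        fix i assume i: "i \<in> {i\<in>{..<m}. Ys i w \<in> A x0 (\<eta> x0) (K x0)}"
        then have "Ys i w \<in> R" unfolding A_def by auto
        moreover have "loss x E + \<eta> x0 < loss x (Ys i w)"
          using near[of "Ys i w" x0 "\<eta> x0" "K x0" x] i eta x0(1) dx by auto
        ultimately show "i \<in> {i\<in>{..<m}. \<not> g1 i \<le> c}" using i c_lt unfolding g1_def by auto
      qed
      have cA: "real (card {i\<in>{..<m}. Ys i w \<in> A x0 (\<eta> x0) (K x0)}) > (1 - \<beta>) * real m"
      proof -
        have "(\<Sum>i<m. indicator (A x0 (\<eta> x0) (K x0)) (Ys i w)) / real m > 1 - \<beta>"
          using elim(2) x0(1) unfolding m_def by auto
        then show ?thesis unfolding sum_indicator_card using rm by (simp add: less_divide_eq mult.commute)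
      qed
      have "card {i\<in>{..<m}. g1 i \<le> c} + card {i\<in>{..<m}. \<not> g1 i \<le> c} = m" by (rule card_filter_split)
      moreover have "card {i\<in>{..<m}. Ys i w \<in> A x0 (\<eta> x0) (K x0)} \<le> card {i\<in>{..<m}. \<not> g1 i \<le> c}"
        by (intro card_mono sub) auto
      ultimately have cnt: "real (card {i\<in>{..<m}. g1 i \<le> c}) < \<beta> * real m"
        using cA by (simp add: algebra_simps)
      have "\<rho> (emp_law g1 m) = \<rho> (emp_law g2 m)"
        by (rule rho_emp_eq[OF trm mpos diff cnt]) auto
      then show "rho_hat \<rho> R Ys w n x = rho_tilde \<rho> M Y R Ys w (Nsamp R Ys w n) x"
        unfolding rho_hat_def rho_tilde_def g1_def[symmetric] g2_def[symmetric] m_def N_def[symmetric]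
        by (simp add: g1_def[abs_def] g2_def[abs_def])
    qed
  qed
qed

end

context setting
begin

lemma consistency:
  assumes trm: "tail_risk_measure \<beta> \<rho>"
  shows "AE w in M. \<forall>\<^sub>F n in sequentially. Nsamp R Ys w n > n \<and>
            (\<forall>x\<in>X. rho_hat \<rho> R Ys w n x = rho_tilde \<rho> M Y R Ys w (Nsamp R Ys w n) x)"
proof -
  obtain B where B: "\<forall>x\<in>X. norm x \<le> B" "B \<ge> 0"
  proof -
    obtain B0 where "\<forall>x\<in>X. norm x \<le> B0" using compact_imp_bounded[OF cX] by (auto simp: bounded_iff)
    then show ?thesis by (intro that[of "max B0 0"]) auto
  qed
  have "\<forall>x0\<in>X. \<exists>pr. fst pr > 0 \<and> prob {w\<in>space M. Y w \<in> A x0 (fst pr) (snd pr)} > 1 - \<beta>"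
    using eta_K by fastforce
  then obtain f where f: "\<forall>x0\<in>X. fst (f x0) > 0 \<and> prob {w\<in>space M. Y w \<in> A x0 (fst (f x0)) (snd (f x0))} > 1 - \<beta>"
    by (metis bchoice)
  define \<eta> where "\<eta> x0 = fst (f x0)" for x0
  define K where "K x0 = snd (f x0)" for x0
  define r where "r x0 = \<eta> x0 / (\<bar>K x0\<bar> + norm E + 1)" for x0
  have rpos: "r x0 > 0" if "x0 \<in> X" for x0
    using f that unfolding r_def \<eta>_def by (intro divide_pos_pos) (auto intro: add_nonneg_pos)
  obtain F where F: "F \<subseteq> X" "finite F" "X \<subseteq> (\<Union>x0\<in>F. ball x0 (r x0))"
  proof (rule compactE_image[OF cX, of X "\<lambda>x0. ball x0 (r x0)"])
    show "X \<subseteq> (\<Union>x0\<in>X. ball x0 (r x0))" using rpos by force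
  qed auto
  define p where "p x0 = prob {w\<in>space M. Y w \<in> A x0 (\<eta> x0) (K x0)}" for x0
  have int_ind: "integrable M (\<lambda>w. indicator C (Y w) :: real)" if [measurable]: "C \<in> sets borel" for C
    by (rule integrable_const_bound[where B=1]) (auto intro!: AE_I2 simp: indicator_def)
  have E_ind: "expectation (\<lambda>w. indicator C (Y w) :: real) = prob {w\<in>space M. Y w \<in> C}" if [measurable]: "C \<in> sets borel" for C
  proof -
    have "expectation (\<lambda>w. indicator C (Y w) :: real) = expectation (indicator {w\<in>space M. Y w \<in> C})"
      by (intro Bochner_Integration.integral_cong) (auto simp: indicator_def)
    also have "\<dots> = prob {w\<in>space M. Y w \<in> C}" by simp
    finally show ?thesis .
  qed
  have AE1: "AE w in M. (\<lambda>m. (\<Sum>i<m. indicator (-R) (Ys i w)) / real m) \<longlonglongrightarrow> pc"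
  proof -
    have "expectation (\<lambda>w. indicator (-R) (Y w) :: real) = pc"
      unfolding E_ind[OF borel_comp[OF Rb]] pc_def S_def by simp
    then show ?thesis using slln_fun[of "indicator (-R)"] int_ind[of "-R"] by simp
  qed
  have AE2: "AE w in M. \<forall>b\<in>Basis. (\<lambda>m. (\<Sum>i<m. indicator (-R) (Ys i w) * (Ys i w \<bullet> b)) / real m) \<longlonglongrightarrow> V \<bullet> b"
  proof (rule AE_finite_allI[OF finite_Basis])
    fix b :: 'a assume b: "b \<in> Basis"
    have ii: "integrable M (\<lambda>w. (Y w \<bullet> b) * indicator S w)"
      by (intro integrable_real_mult_indicator S_sets integrable_inner_left intY)
    have int: "integrable M (\<lambda>w. indicator (-R) (Y w) * (Y w \<bullet> b) :: real)"
    proof -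
      have "integrable M (\<lambda>w. indicator (-R) (Y w) * (Y w \<bullet> b) :: real) \<longleftrightarrow> integrable M (\<lambda>w. (Y w \<bullet> b) * indicator S w)"
        by (intro Bochner_Integration.integrable_cong) (auto simp: S_def indicator_def)
      then show ?thesis using ii by simp
    qed
    have "expectation (\<lambda>w. indicator (-R) (Y w) * (Y w \<bullet> b)) = expectation (\<lambda>w. (indicator S w *\<^sub>R Y w) \<bullet> b)"
      by (intro Bochner_Integration.integral_cong) (auto simp: S_def indicator_def)
    also have "\<dots> = V \<bullet> b"
      unfolding V_def set_lebesgue_integral_def
      by (rule integral_inner_left) (intro integrable_mult_indicator S_sets intY)
    finally have EV: "expectation (\<lambda>w. indicator (-R) (Y w) * (Y w \<bullet> b)) = V \<bullet> b" .
    show "AE w in M. (\<lambda>m. (\<Sum>i<m. indicator (-R) (Ys i w) * (Ys i w \<bullet> b)) / real m) \<longlonglongrightarrow> V \<bullet> b"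
      using slln_fun[of "\<lambda>y. indicator (-R) y * (y \<bullet> b)"] int EV by simp
  qed
  have AE3: "AE w in M. \<forall>x0\<in>F. (\<lambda>m. (\<Sum>i<m. indicator (A x0 (\<eta> x0) (K x0)) (Ys i w)) / real m) \<longlonglongrightarrow> p x0"
  proof (rule AE_finite_allI[OF F(2)])
    fix x0 assume "x0 \<in> F"
    show "AE w in M. (\<lambda>m. (\<Sum>i<m. indicator (A x0 (\<eta> x0) (K x0)) (Ys i w)) / real m) \<longlonglongrightarrow> p x0"
      using slln_fun[of "indicator (A x0 (\<eta> x0) (K x0))"] int_ind[of "A x0 (\<eta> x0) (K x0)"]
        E_ind[of "A x0 (\<eta> x0) (K x0)"] unfolding p_def by simp
  qed
  have pF: "\<forall>x0\<in>F. p x0 > 1 - \<beta>" using f F(1) unfolding p_def \<eta>_def K_def by auto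
  have etaF: "\<forall>x0\<in>F. \<eta> x0 > 0" using f F(1) unfolding \<eta>_def by auto
  show ?thesis
    using AE1 AE2 AE3
  proof (eventually_elim)
    case (elim w)
    show ?case
      by (rule det_main[OF elim(1) elim(2) elim(3) pF F(2) etaF F(3)[unfolded r_def] B trm])
  qed
qed

end

theorem mainTheorem11:
  fixes M :: "'w measure" and Y :: "'w \<Rightarrow> 'a::euclidean_space"
    and X :: "'a set" and \<beta> :: real and R :: "'a set" and x1 x2 :: 'a
  assumes "prob_space M"
    and "Y \<in> borel_measurable M"
    and "0 < \<beta>" and "\<beta> < 1"
    and "support_of (distr M borel Y) = UNIV"
    and "x1 \<in> X" and "x2 \<in> X" and "x1 \<noteq> x2" and "independent {x1, x2}"
    and "riskregion M Y \<beta> X \<subseteq> R" and "R \<in> sets borel"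
  shows "aggregation_condition M Y \<beta> X R \<and>
    (\<forall>(Ys :: nat \<Rightarrow> 'w \<Rightarrow> 'a) (\<rho> :: real measure \<Rightarrow> ereal).
       absolutely_continuous lborel (distr M borel Y) \<and> compact X \<and>
       integrable M Y \<and>
       0 < measure M {w\<in>space M. Y w \<notin> R} \<and> measure M {w\<in>space M. Y w \<notin> R} < 1 \<and>
       prob_space.indep_vars M (\<lambda>_. borel) Ys UNIV \<and> (\<forall>i. distr M borel (Ys i) = distr M borel Y) \<and>
       tail_risk_measure \<beta> \<rho>
     \<longrightarrow> (AE w in M. eventually (\<lambda>n. Nsamp R Ys w n > n \<and>
            (\<forall>x\<in>X. rho_hat \<rho> R Ys w n x = rho_tilde \<rho> M Y R Ys w (Nsamp R Ys w n) x))
          sequentially))"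
proof -
  interpret prob_space M by (rule assms(1))
  have part1: "aggregation_condition M Y \<beta> X R"
    by (rule agg_full[OF assms(1,2,3,4,5,6,7,8,9,10,11)])
  show ?thesis
  proof (intro conjI allI impI part1, elim conjE)
    fix Ys :: "nat \<Rightarrow> 'w \<Rightarrow> 'a" and \<rho> :: "real measure \<Rightarrow> ereal"
    assume h: "compact X" "integrable M Y" "0 < measure M {w\<in>space M. Y w \<notin> R}"
      "measure M {w\<in>space M. Y w \<notin> R} < 1" "indep_vars (\<lambda>_. borel) Ys UNIV"
      "\<forall>i. distr M borel (Ys i) = distr M borel Y" "tail_risk_measure \<beta> \<rho>"
    interpret setting M Y X \<beta> R x1 x2 Ys
      by unfold_locales (use assms h in auto)
    show "AE w in M. \<forall>\<^sub>F n in sequentially. Nsamp R Ys w n > n \<and>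
            (\<forall>x\<in>X. rho_hat \<rho> R Ys w n x = rho_tilde \<rho> M Y R Ys w (Nsamp R Ys w n) x)"
      by (rule consistency[OF h(7)])
  qed
qed


end
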